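(* Let $A>0$ and let $k_0$ be the largest integer strictly smaller than $\sigma$. Let $\phi(\cdot;A)$ be the solution of $$(\phi^m)''+\frac{N-1}{\xi}(\phi^m)'+\alpha\phi+\beta\xi\phi'=0,\qquad \phi(0)=A,\ \phi'(0)=0,$$ and let $B_j$ be the Taylor coefficients of $\phi^m(\cdot;A)$ at $\xi=0$. Then, as $\xi\to0$, $$f^m(\xi;A)=\sum_{j=0}^{k_0+2}B_j\xi^j+\frac{A^p}{(\sigma+2)(\sigma+N)}\xi^{\sigma+2}+o(\xi^{\sigma+2})\quad\text{if }\sigma\notin\mathbb{N},$$ and $$f^m(\xi;A)=\sum_{j=0}^{k_0+3}B_j\xi^j+\frac{A^p}{(\sigma+2)(\sigma+N)}\xi^{\sigma+2}+o(\xi^{\sigma+2})\quad\text{if }\sigma\in\mathbb{N}\ (k_0=\sigma-1).$$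
   Context: Let $N\geq1$, $m>1$, $\sigma>0$, $p>m$, $L=\sigma(m-1)+2(p-1)$, $\alpha=(\sigma+2)/L$, $\beta=(p-m)/L$. For $A>0$, $f(\cdot;A)$ denotes the unique solution of $$(f^m)''+\frac{N-1}{\xi}(f^m)'+\alpha f+\beta\xi f'-\xi^{\sigma}f^p=0,\qquad f(0)=A,\ f'(0)=0,$$ positive on a maximal interval $[0,\xi_{\max}(A))$ with $f^m\in C^2$ there. *)

theory Defs
  imports "HOL-Analysis.Analysis" "HOL-Library.Landau_Symbols"
begin

definition Lc :: "real \<Rightarrow> real \<Rightarrow> real \<Rightarrow> real" where
  "Lc m \<sigma> p = \<sigma> * (m - 1) + 2 * (p - 1)"

definition alpha :: "real \<Rightarrow> real \<Rightarrow> real \<Rightarrow> real" where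
  "alpha m \<sigma> p = (\<sigma> + 2) / Lc m \<sigma> p"

definition beta :: "real \<Rightarrow> real \<Rightarrow> real \<Rightarrow> real" where
  "beta m \<sigma> p = (p - m) / Lc m \<sigma> p"

text \<open>\<open>is_profile N m \<sigma> p c A f xm\<close>: \<open>f\<close> is a solution on \<open>[0,xm)\<close> of
  \<open>(f^m)'' + (N-1)/\<xi> (f^m)' + \<alpha> f + \<beta> \<xi> f' - c \<xi>^\<sigma> f^p = 0\<close>,
  \<open>f(0) = A\<close>, \<open>f'(0) = 0\<close>, positive on \<open>[0,xm)\<close>, with \<open>f^m \<in> C^2([0,xm))\<close>
  (one-sided derivatives at 0).  With \<open>c = 1\<close> this is the equation for \<open>f\<close>,
  with \<open>c = 0\<close> the equation for \<open>\<phi>\<close>.\<close>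
definition is_profile ::
  "nat \<Rightarrow> real \<Rightarrow> real \<Rightarrow> real \<Rightarrow> real \<Rightarrow> real \<Rightarrow> (real \<Rightarrow> real) \<Rightarrow> real \<Rightarrow> bool" where
  "is_profile N m \<sigma> p c A f xm \<longleftrightarrow>
     0 < xm \<and> f 0 = A \<and> (\<forall>\<xi>\<in>{0..<xm}. 0 < f \<xi>) \<and>
     (\<exists>f1 u1 u2.
        f1 0 = 0 \<and>
        (\<forall>\<xi>\<in>{0..<xm}. (f has_real_derivative f1 \<xi>) (at \<xi> within {0..<xm})) \<and>
        (\<forall>\<xi>\<in>{0..<xm}. ((\<lambda>x. f x powr m) has_real_derivative u1 \<xi>) (at \<xi> within {0..<xm})) \<and>
        (\<forall>\<xi>\<in>{0..<xm}. (u1 has_real_derivative u2 \<xi>) (at \<xi> within {0..<xm})) \<and>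
        continuous_on {0..<xm} u2 \<and>
        (\<forall>\<xi>\<in>{0<..<xm}.
           u2 \<xi> + (real N - 1) / \<xi> * u1 \<xi> + alpha m \<sigma> p * f \<xi>
             + beta m \<sigma> p * \<xi> * f1 \<xi> - c * \<xi> powr \<sigma> * f \<xi> powr p = 0))"

definition taylor_coeff0 :: "(real \<Rightarrow> real) \<Rightarrow> nat \<Rightarrow> real" where
  "taylor_coeff0 g j =
     (((\<lambda>h x. vector_derivative h (at x within {0..})) ^^ j) g 0) / fact j"

end

theory Submission
  imports Defs
begin


fun Ck :: "nat \<Rightarrow> real set \<Rightarrow> (real \<Rightarrow> real) \<Rightarrow> bool" where
  "Ck 0 S h = continuous_on S h"
| "Ck (Suc k) S h = (\<exists>h'. (\<forall>x\<in>S. (h has_real_derivative h' x) (at x within S)) \<and> Ck k S h')"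

lemma Ck_cont: "Ck k S h \<Longrightarrow> continuous_on S h"
  by (cases k) (auto intro: DERIV_continuous_on)

lemma Ck_Suc_imp: "Ck (Suc k) S h \<Longrightarrow> Ck k S h"
proof (induction k arbitrary: h)
  case 0 then show ?case by (auto intro: DERIV_continuous_on)
next
  case (Suc k) then show ?case by (metis Ck.simps(2))
qed

lemma Ck_le: "Ck k S h \<Longrightarrow> j \<le> k \<Longrightarrow> Ck j S h"
proof (induction k)
  case 0 then show ?case by simp
next
  case (Suc k) then show ?case using Ck_Suc_imp le_Suc_eq by blast
qed

lemma Ck_cong: "Ck k S h \<Longrightarrow> (\<And>x. x\<in>S \<Longrightarrow> h x = g x) \<Longrightarrow> Ck k S g"
proof (induction k arbitrary: h g)
  case 0 then show ?case using continuous_on_cong by force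
next
  case (Suc k)
  then obtain h' where h': "\<forall>x\<in>S. (h has_real_derivative h' x) (at x within S)" "Ck k S h'" by auto
  have "\<forall>x\<in>S. (g has_real_derivative h' x) (at x within S)"
    using h'(1) Suc.prems(2) by (metis has_field_derivative_transform_within zero_less_one)
  then show ?case using h'(2) by auto
qed

lemma Ck_const: "Ck k S (\<lambda>x. c)"
proof (induction k arbitrary: c)
  case 0 then show ?case by simp
next
  case (Suc k) then show ?case by (auto intro!: exI[of _ "\<lambda>x. 0"] derivative_eq_intros)
qed

lemma Ck_id: "Ck k S (\<lambda>x. x)"
  by (cases k) (auto intro!: exI[of _ "\<lambda>x. 1"] derivative_eq_intros Ck_const continuous_intros)

lemma Ck_add: "Ck k S f \<Longrightarrow> Ck k S g \<Longrightarrow> Ck k S (\<lambda>x. f x + g x)"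
proof (induction k arbitrary: f g)
  case 0 then show ?case by (auto intro: continuous_intros)
next
  case (Suc k)
  then obtain f' g' where "\<forall>x\<in>S. (f has_real_derivative f' x) (at x within S)" "Ck k S f'"
    "\<forall>x\<in>S. (g has_real_derivative g' x) (at x within S)" "Ck k S g'" by auto
  then show ?case using Suc.IH by (auto intro!: exI[of _ "\<lambda>x. f' x + g' x"] derivative_eq_intros)
qed

lemma Ck_mult: "Ck k S f \<Longrightarrow> Ck k S g \<Longrightarrow> Ck k S (\<lambda>x. f x * g x)"
proof (induction k arbitrary: f g)
  case 0 then show ?case by (auto intro: continuous_intros)
next
  case (Suc k)
  then obtain f' g' where d: "\<forall>x\<in>S. (f has_real_derivative f' x) (at x within S)" "Ck k S f'"
    "\<forall>x\<in>S. (g has_real_derivative g' x) (at x within S)" "Ck k S g'" by auto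
  have "Ck k S (\<lambda>x. f' x * g x + f x * g' x)"
    using Suc.IH d Suc.prems Ck_Suc_imp Ck_add by metis
  then show ?case using d by (auto intro!: exI[of _ "\<lambda>x. f' x * g x + f x * g' x"] derivative_eq_intros)
qed

lemma Ck_cmult: "Ck k S f \<Longrightarrow> Ck k S (\<lambda>x. c * f x)"
  using Ck_mult[OF Ck_const] by blast

lemma Ck_diff: "Ck k S f \<Longrightarrow> Ck k S g \<Longrightarrow> Ck k S (\<lambda>x. f x - g x)"
  using Ck_add[of k S f "\<lambda>x. (-1) * g x"] Ck_cmult[of k S g "-1"] by simp

lemma Ck_powr: "Ck k S h \<Longrightarrow> (\<And>x. x\<in>S \<Longrightarrow> h x > 0) \<Longrightarrow> Ck k S (\<lambda>x. h x powr c)"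
proof (induction k arbitrary: c)
  case 0
  have "\<And>x. x\<in>S \<Longrightarrow> h x \<noteq> 0" using 0(2) by force
  then show ?case using 0(1) by (auto intro!: continuous_intros)
next
  case (Suc k)
  then obtain h' where d: "\<forall>x\<in>S. (h has_real_derivative h' x) (at x within S)" "Ck k S h'" by auto
  have "Ck k S (\<lambda>x. c * (h x powr (c - 1) * h' x))"
    using Suc d Ck_Suc_imp Ck_mult Ck_cmult by metis
  moreover have "\<forall>x\<in>S. ((\<lambda>x. h x powr c) has_real_derivative c * (h x powr (c - 1) * h' x)) (at x within S)"
    using d(1) Suc.prems(2) by (auto intro!: derivative_eq_intros)
  ultimately show ?case by auto
qed



lemma deriv_local:
  assumes "(f has_real_derivative D) (at x within {0..b})" "0 \<le> x" "x < b" "b \<le> d"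
  shows "(f has_real_derivative D) (at x within {0..<d})"
proof -
  have "at x within {0..b} = at x within {0..<d}"
    by (rule at_within_nhd[of _ "{..<b}"]) (use assms in auto)
  then show ?thesis using assms(1) by simp
qed

lemma within_to_at:
  assumes "(f has_real_derivative D) (at x within {0..<d})" "0 < x" "x < d"
  shows "(f has_real_derivative D) (at x)"
proof -
  have "at x within {0..<d} = at x"
    by (rule at_within_interior) (use assms in auto)
  then show ?thesis using assms(1) by simp
qed

lemma I_deriv:
  assumes "continuous_on {0..<d} g" "0 \<le> x" "x < d"
  shows "((\<lambda>x. integral {0..x} g) has_real_derivative g x) (at x within {0..<d})"
proof -
  define b where "b = (x + d) / 2"
  have "continuous_on {0..b} g" using assms(1) by (rule continuous_on_subset) (use assms(3) in \<open>auto simp: b_def\<close>)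
  then have "((\<lambda>x. integral {0..x} g) has_real_derivative g x) (at x within {0..b})"
    by (rule integral_has_real_derivative) (use assms in \<open>auto simp: b_def\<close>)
  then show ?thesis by (rule deriv_local) (use assms in \<open>auto simp: b_def\<close>)
qed

lemma mvt_bound:
  fixes E :: "real \<Rightarrow> real"
  assumes "0 < s" "continuous_on {0..s} E"
    "\<And>t. 0 < t \<Longrightarrow> t < s \<Longrightarrow> (E has_real_derivative E' t) (at t)"
    "\<And>t. 0 < t \<Longrightarrow> t < s \<Longrightarrow> \<bar>E' t\<bar> \<le> B"
  shows "\<bar>E s - E 0\<bar> \<le> B * s"
proof -
  obtain l z where z: "0 < z" "z < s" "DERIV E z :> l" "E s - E 0 = (s - 0) * l"
    using MVT[OF assms(1) assms(2)] assms(3) real_differentiable_def by blast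
  have "l = E' z" using DERIV_unique[OF z(3) assms(3)[OF z(1,2)]] .
  then have "\<bar>E s - E 0\<bar> = s * \<bar>E' z\<bar>" using z(4) assms(1) by (simp add: abs_mult)
  also have "\<dots> \<le> s * B" using assms(4)[OF z(1,2)] assms(1) by (intro mult_left_mono) auto
  finally show ?thesis by (simp add: mult.commute)
qed

lemma deriv_at0_from_limit:
  fixes h h' :: "real \<Rightarrow> real"
  assumes "0 < d" "continuous_on {0..<d} h"
    "\<And>x. 0 < x \<Longrightarrow> x < d \<Longrightarrow> (h has_real_derivative h' x) (at x)"
    "continuous_on {0..<d} h'"
  shows "(h has_real_derivative h' 0) (at 0 within {0..<d})"
proof -
  have c0: "continuous (at 0 within {0..<d}) h'"
    using assms(4) assms(1) by (metis atLeastLessThan_iff continuous_on_eq_continuous_within order_refl)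
  show ?thesis unfolding has_field_derivative_iff Lim_within
  proof (intro allI impI)
    fix e :: real assume "e > 0"
    then obtain r where r: "r > 0" "\<And>x. x \<in> {0..<d} \<Longrightarrow> dist x 0 < r \<Longrightarrow> dist (h' x) (h' 0) < e"
      using c0 unfolding continuous_within_eps_delta by (metis dist_commute)
    show "\<exists>r>0. \<forall>x\<in>{0..<d}. 0 < dist x 0 \<and> dist x 0 < r \<longrightarrow> dist ((h x - h 0) / (x - 0)) (h' 0) < e"
    proof (intro exI[of _ r] conjI ballI impI)
      fix x assume x: "x \<in> {0..<d}" "0 < dist x 0 \<and> dist x 0 < r"
      then have x0: "0 < x" "x < d" "x < r" by auto
      have "continuous_on {0..x} h" using assms(2) by (rule continuous_on_subset) (use x0 in auto)
      then obtain l z where z: "0 < z" "z < x" "DERIV h z :> l" "h x - h 0 = (x - 0) * l"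
        using MVT[OF x0(1)] assms(3) x0 real_differentiable_def
        by (metis (no_types, lifting) order.strict_trans)
      have "l = h' z" using DERIV_unique[OF z(3) assms(3)] z x0 by auto
      then have "(h x - h 0) / (x - 0) = h' z" using z(4) x0 by simp
      moreover have "dist (h' z) (h' 0) < e" using r(2)[of z] z x0 by auto
      ultimately show "dist ((h x - h 0) / (x - 0)) (h' 0) < e" by simp
    qed (use r in auto)
  qed
qed



definition Tn :: "nat \<Rightarrow> (real \<Rightarrow> real) \<Rightarrow> real \<Rightarrow> real" where
  "Tn n R x = (if x = 0 then R 0 / real n else integral {0..x} (\<lambda>s. s^(n-1) * R s) / x^n)"

lemma T_cont:
  assumes n: "n \<ge> 1" and d: "0 < d" and R: "continuous_on {0..<d} R"
  shows "continuous_on {0..<d} (Tn n R)"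
proof -
  define g where "g = (\<lambda>s. s^(n-1) * R s)"
  define I where "I x = integral {0..x} g" for x
  have gc: "continuous_on {0..<d} g" unfolding g_def using R by (auto intro!: continuous_intros)
  have Id: "(I has_real_derivative g x) (at x within {0..<d})" if "0 \<le> x" "x < d" for x
    unfolding I_def using I_deriv[OF gc that] .
  have Ic: "continuous_on {0..<d} I" using Id by (intro DERIV_continuous_on) auto
  have T: "Tn n R x = I x / x^n" if "x \<noteq> 0" for x using that by (simp add: Tn_def I_def g_def)
  show ?thesis unfolding continuous_on_eq_continuous_within
  proof
    fix x assume x: "x \<in> {0..<d}"
    show "continuous (at x within {0..<d}) (Tn n R)"
    proof (cases "x = 0")
      case False
      then have x0: "0 < x" "x < d" using x by auto
      have "isCont I x" using within_to_at[OF Id x0] x0 by (auto intro: DERIV_isCont)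
      then have "isCont (\<lambda>y. I y / y^n) x" using x0 by (auto intro!: continuous_intros)
      then have "continuous (at x within {0..<d}) (\<lambda>y. I y / y^n)"
        by (rule continuous_at_imp_continuous_at_within)
      then show ?thesis
        by (rule continuous_transform_within[of x]) (use x0 T in \<open>auto simp: dist_real_def\<close>)
    next
      case True
      have c0: "continuous (at 0 within {0..<d}) R"
        using R d by (metis atLeastLessThan_iff continuous_on_eq_continuous_within order_refl)
      show ?thesis unfolding True continuous_within_eps_delta
      proof (intro allI impI)
        fix e :: real assume e: "e > 0"
        then obtain r where r: "r > 0" "\<And>y. y \<in> {0..<d} \<Longrightarrow> dist y 0 < r \<Longrightarrow> dist (R y) (R 0) < e/2"
          using c0 unfolding continuous_within_eps_delta by (metis half_gt_zero)
        show "\<exists>r>0. \<forall>y\<in>{0..<d}. dist y 0 < r \<longrightarrow> dist (Tn n R y) (Tn n R 0) < e"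
        proof (intro exI[of _ r] conjI ballI impI)
          fix y assume y: "y \<in> {0..<d}" "dist y 0 < r"
          show "dist (Tn n R y) (Tn n R 0) < e"
          proof (cases "y = 0")
            case True then show ?thesis using e by simp
          next
            case False
            then have y0: "0 < y" "y < d" "y < r" using y by auto
            define K where "K t = I t - R 0 * t^n / n" for t
            have Kc: "continuous_on {0..y} K" unfolding K_def
              using Ic y0 n by (auto intro!: continuous_intros intro: continuous_on_subset)
            have Kd: "(K has_real_derivative (g t - R 0 * (real n * t^(n-1)) / n)) (at t)"
              if "0 < t" "t < y" for t
              unfolding K_def using within_to_at[OF Id] that y0
              by (auto intro!: derivative_eq_intros)
            have Kb: "\<bar>g t - R 0 * (real n * t^(n-1)) / n\<bar> \<le> y^(n-1) * (e/2)"
              if "0 < t" "t < y" for t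
            proof -
              have "g t - R 0 * (real n * t^(n-1)) / n = t^(n-1) * (R t - R 0)"
                using n by (simp add: g_def algebra_simps)
              also have "\<bar>\<dots>\<bar> = t^(n-1) * \<bar>R t - R 0\<bar>" using that by (simp add: abs_mult)
              also have "\<dots> \<le> y^(n-1) * (e/2)"
                using r(2)[of t] that y0 
                by (intro mult_mono power_mono) (auto simp: dist_real_def)
              finally show ?thesis .
            qed
            have Kb2: "\<bar>K y - K 0\<bar> \<le> y^(n-1) * (e/2) * y"
              by (rule mvt_bound[OF y0(1) Kc Kd Kb])
            have K0: "K 0 = 0" using n by (simp add: K_def I_def)
            have yy: "y^(n-1) * y = y^n" using n by (cases n) auto
            have Ey: "y^(n-1) * (e/2) * y = (e/2) * y^n" unfolding yy[symmetric] by (simp only: ac_simps)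
            have Ky: "\<bar>K y\<bar> \<le> e/2 * y^n" using Kb2 unfolding K0 Ey by simp
            have TK: "Tn n R y - Tn n R 0 = K y / y^n"
            proof -
              have "Tn n R 0 = R 0 / n" by (simp add: Tn_def)
              then show ?thesis using y0 n T[of y] by (simp add: K_def field_simps)
            qed
            have "\<bar>Tn n R y - Tn n R 0\<bar> \<le> e/2"
              unfolding TK using y0 Ky by (simp add: abs_divide divide_le_eq)
            then show ?thesis using e by (simp add: dist_real_def)
          qed
        qed (use r in auto)
      qed
    qed
  qed
qed



lemma T_deriv_pos:
  assumes n: "n \<ge> 1" and d: "0 < d"
    and R: "\<And>x. x \<in> {0..<d} \<Longrightarrow> (R has_real_derivative R' x) (at x within {0..<d})"
    and R'c: "continuous_on {0..<d} R'"
    and x: "0 < x" "x < d"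
  shows "(Tn n R has_real_derivative Tn (Suc n) R' x) (at x)"
proof -
  have Rc: "continuous_on {0..<d} R" using R by (intro DERIV_continuous_on) auto
  define g where "g = (\<lambda>s. s^(n-1) * R s)"
  define I where "I x = integral {0..x} g" for x
  define g' where "g' = (\<lambda>s. s^n * R' s)"
  define J where "J x = integral {0..x} g'" for x
  have gc: "continuous_on {0..<d} g" unfolding g_def using Rc by (auto intro!: continuous_intros)
  have g'c: "continuous_on {0..<d} g'" unfolding g'_def using R'c by (auto intro!: continuous_intros)
  have Id: "(I has_real_derivative g y) (at y within {0..<d})" if "0 \<le> y" "y < d" for y
    unfolding I_def using I_deriv[OF gc that] .
  have Jd: "(J has_real_derivative g' y) (at y within {0..<d})" if "0 \<le> y" "y < d" for y
    unfolding J_def using I_deriv[OF g'c that] .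
  have Ic: "continuous_on {0..<d} I" using Id by (intro DERIV_continuous_on) auto
  have Jc: "continuous_on {0..<d} J" using Jd by (intro DERIV_continuous_on) auto
  define H where "H y = y^n * R y - n * I y - J y" for y
  have Hc: "continuous_on {0..x} H" unfolding H_def
    using Rc Ic Jc x by (auto intro!: continuous_intros intro: continuous_on_subset)
  have Hd: "(H has_real_derivative 0) (at t)" if "0 < t" "t < x" for t
  proof -
    have t: "0 < t" "t < d" using that x by auto
    have "(H has_real_derivative (real n * t^(n-1) * R t + t^n * R' t - n * g t - g' t)) (at t)"
      unfolding H_def using within_to_at[OF Id t] within_to_at[OF Jd t] within_to_at[OF R t] t
      by (auto intro!: derivative_eq_intros)
    moreover have "real n * t^(n-1) * R t + t^n * R' t - n * g t - g' t = 0"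
      by (simp add: g_def g'_def)
    ultimately show ?thesis by simp
  qed
  have "H x = H 0" by (rule DERIV_isconst_end[OF x(1) Hc Hd])
  moreover have "H 0 = 0" using n by (simp add: H_def I_def J_def)
  ultimately have HJ: "J x = x^n * R x - n * I x" by (simp add: H_def)
  have "((\<lambda>y. I y / y^n) has_real_derivative (g x * x^n - I x * (real n * x^(n-1))) / (x^n * x^n)) (at x)"
    using within_to_at[OF Id x] x by (auto intro!: derivative_eq_intros)
  moreover have "(g x * x^n - I x * (real n * x^(n-1))) / (x^n * x^n) = Tn (Suc n) R' x"
  proof -
    obtain m where m: "n = Suc m" using n by (cases n) auto
    have "Tn (Suc n) R' x = J x / x^(Suc n)" using x by (simp add: Tn_def J_def g'_def)
    also have "\<dots> = (x^n * R x - n * I x) / x^(Suc n)" using HJ by simp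
    also have "\<dots> = (g x * x^n - I x * (real n * x^(n-1))) / (x^n * x^n)"
      using x unfolding m g_def by (simp add: field_simps)
    finally show ?thesis by simp
  qed
  ultimately have D1: "((\<lambda>y. I y / y^n) has_real_derivative Tn (Suc n) R' x) (at x)" by simp
  show ?thesis
    by (rule has_field_derivative_transform_within_open[OF D1, of "{0<..<d}"])
       (use x in \<open>auto simp: Tn_def I_def g_def\<close>)
qed

lemma T_deriv:
  assumes n: "n \<ge> 1" and d: "0 < d"
    and R: "\<And>x. x \<in> {0..<d} \<Longrightarrow> (R has_real_derivative R' x) (at x within {0..<d})"
    and R'c: "continuous_on {0..<d} R'"
    and x: "x \<in> {0..<d}"
  shows "(Tn n R has_real_derivative Tn (Suc n) R' x) (at x within {0..<d})"
proof (cases "x = 0")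
  case False
  then show ?thesis using T_deriv_pos[OF n d R R'c] x
    by (auto intro: has_field_derivative_at_within)
next
  case True
  have Rc: "continuous_on {0..<d} R" using R by (intro DERIV_continuous_on) auto
  show ?thesis unfolding True
    by (rule deriv_at0_from_limit[OF d T_cont[OF n d Rc] T_deriv_pos[OF n d R R'c] T_cont[OF _ d R'c]])
       (use n in auto)
qed

lemma T_Ck:
  assumes "n \<ge> 1" "0 < d" "Ck k {0..<d} R"
  shows "Ck k {0..<d} (Tn n R)"
  using assms
proof (induction k arbitrary: n R)
  case 0 then show ?case using T_cont by simp
next
  case (Suc k)
  then obtain R' where R': "\<forall>x\<in>{0..<d}. (R has_real_derivative R' x) (at x within {0..<d})"
    "Ck k {0..<d} R'" by auto
  have "\<forall>x\<in>{0..<d}. (Tn n R has_real_derivative Tn (Suc n) R' x) (at x within {0..<d})"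
    using T_deriv[OF Suc.prems(1,2)] R' Ck_cont by blast
  moreover have "Ck k {0..<d} (Tn (Suc n) R')" using Suc.IH[of "Suc n" R'] R' Suc.prems by simp
  ultimately show ?case by auto
qed



lemma nb: "0 < (d::real) \<Longrightarrow> x \<in> {0..<d} \<Longrightarrow> at x within {0..<d} \<noteq> bot"
  using islimpt_Ico[of 0 d x] by (auto simp: trivial_limit_within)

lemma cont_eq_at0:
  fixes f g :: "real \<Rightarrow> real"
  assumes d: "0 < d" and "continuous_on {0..<d} f" "continuous_on {0..<d} g"
    and eq: "\<And>x. 0 < x \<Longrightarrow> x < d \<Longrightarrow> f x = g x"
  shows "f 0 = g 0"
proof -
  have "(f \<longlongrightarrow> f 0) (at 0 within {0..<d})" "(g \<longlongrightarrow> g 0) (at 0 within {0..<d})"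
    using assms(2,3) d by (auto simp: continuous_on_def)
  moreover have "\<forall>\<^sub>F x in at 0 within {0..<d}. f x = g x"
    unfolding eventually_at_filter using eq by (auto intro!: always_eventually)
  ultimately have "(g \<longlongrightarrow> f 0) (at 0 within {0..<d})" "(g \<longlongrightarrow> g 0) (at 0 within {0..<d})"
    using tendsto_cong by blast+
  then show ?thesis using tendsto_unique nb[OF d] d by fastforce
qed

lemma profile_smooth:
  assumes N: "N \<ge> 1" and m: "m > 1"
    and sol: "is_profile N m \<sigma> p 0 A \<phi> \<delta>"
  shows "Ck k {0..<\<delta>} (\<lambda>x. \<phi> x powr m)"
proof -
  define S where "S = {0..<\<delta>}"
  define w where "w = (\<lambda>x. \<phi> x powr m)"
  obtain f1 u1 u2 where d: "0 < \<delta>" "\<forall>\<xi>\<in>S. 0 < \<phi> \<xi>" "f1 0 = 0"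
    "\<forall>\<xi>\<in>S. (\<phi> has_real_derivative f1 \<xi>) (at \<xi> within S)"
    "\<forall>\<xi>\<in>S. (w has_real_derivative u1 \<xi>) (at \<xi> within S)"
    "\<forall>\<xi>\<in>S. (u1 has_real_derivative u2 \<xi>) (at \<xi> within S)"
    "continuous_on S u2"
    and ode: "\<forall>\<xi>\<in>{0<..<\<delta>}. u2 \<xi> + (real N - 1) / \<xi> * u1 \<xi> + alpha m \<sigma> p * \<phi> \<xi>
             + beta m \<sigma> p * \<xi> * f1 \<xi> - 0 * \<xi> powr \<sigma> * \<phi> \<xi> powr p = 0"
    using sol unfolding is_profile_def S_def w_def by blast
  have wpos: "w x > 0" if "x \<in> S" for x using d(2) that by (force simp: w_def)
  have phiw: "\<phi> x = w x powr (1/m)" if "x \<in> S" for x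
  proof -
    have "\<phi> x > 0" using d(2) that by blast
    then show ?thesis using m by (simp add: w_def powr_powr)
  qed
  have 0: "0 \<in> S" using d(1) by (simp add: S_def)
  have u10: "u1 0 = 0"
  proof -
    have "(w has_real_derivative m * \<phi> 0 powr (m - 1) * f1 0) (at 0 within S)"
      unfolding w_def using d(4) d(2) 0 by (auto intro!: derivative_eq_intros)
    moreover have "(w has_real_derivative u1 0) (at 0 within S)" using d(5) 0 by blast
    moreover have "at 0 within S \<noteq> bot" using nb[OF d(1)] 0 by (simp add: S_def)
    ultimately have "m * \<phi> 0 powr (m - 1) * f1 0 = u1 0" by (rule has_field_derivative_unique)
    then show ?thesis using d(3) by simp
  qed
  have f1eq: "f1 x = 1/m * w x powr (1/m - 1) * u1 x" if "x \<in> S" for x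
  proof -
    have "((\<lambda>x. w x powr (1/m)) has_real_derivative 1/m * w x powr (1/m - 1) * u1 x) (at x within S)"
      using d(5) wpos that by (auto intro!: derivative_eq_intros)
    then have "(\<phi> has_real_derivative 1/m * w x powr (1/m - 1) * u1 x) (at x within S)"
      by (rule has_field_derivative_transform_within[OF _ zero_less_one that]) (simp add: phiw)
    moreover have "(\<phi> has_real_derivative f1 x) (at x within S)" using d(4) that by blast
    moreover have "at x within S \<noteq> bot" using nb[OF d(1)] that by (simp add: S_def)
    ultimately have "1/m * w x powr (1/m - 1) * u1 x = f1 x" by (rule has_field_derivative_unique)
    then show ?thesis by simp
  qed
  define R where "R x = - alpha m \<sigma> p * w x powr (1/m) - beta m \<sigma> p * x * (1/m * w x powr (1/m - 1) * u1 x)" for x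
  have wc: "continuous_on S w" using d(5) by (intro DERIV_continuous_on) auto
  have u1c: "continuous_on S u1" using d(6) by (intro DERIV_continuous_on) auto
  have Rc: "continuous_on S R" 
  proof -
    have "\<And>x. x \<in> S \<Longrightarrow> w x \<noteq> 0" using wpos by force
    then show ?thesis unfolding R_def using wc u1c m by (auto intro!: continuous_intros)
  qed
  have ode2: "u2 x = R x - (real N - 1) / x * u1 x" if "0 < x" "x < \<delta>" for x
  proof -
    have e: "u2 x + (real N - 1) / x * u1 x + alpha m \<sigma> p * \<phi> x + beta m \<sigma> p * x * f1 x = 0"
      using ode that by auto
    have xS: "x \<in> S" using that by (simp add: S_def)
    show ?thesis using e unfolding f1eq[OF xS] phiw[OF xS] R_def by linarith
  qed
  have u1T: "u1 x = x * Tn N R x" if "0 < x" "x < \<delta>" for x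
  proof -
    define g where "g = (\<lambda>s. s^(N-1) * R s)"
    have gc: "continuous_on S g" unfolding g_def using Rc by (auto intro!: continuous_intros)
    define P where "P y = y^(N-1) * u1 y - integral {0..y} g" for y
    have Id: "((\<lambda>y. integral {0..y} g) has_real_derivative g y) (at y within S)" if "y \<in> S" for y
      using I_deriv[OF gc[unfolded S_def]] that by (auto simp: S_def)
    have Ic: "continuous_on S (\<lambda>y. integral {0..y} g)" using Id by (intro DERIV_continuous_on) auto
    have Pc: "continuous_on {0..x} P" unfolding P_def
      using u1c Ic that by (auto intro!: continuous_intros intro: continuous_on_subset simp: S_def)
    have Pd: "(P has_real_derivative 0) (at t)" if "0 < t" "t < x" for t
    proof -
      have t: "0 < t" "t < \<delta>" using that \<open>x < \<delta>\<close> by auto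
      have tS: "t \<in> S" using t by (simp add: S_def)
      have "(P has_real_derivative (real (N-1) * t^(N-1-1) * u1 t + t^(N-1) * u2 t - g t)) (at t)"
        unfolding P_def
        using within_to_at[OF Id[OF tS, unfolded S_def] t] within_to_at[OF d(6)[rule_format, OF tS, unfolded S_def] t]
        by (auto intro!: derivative_eq_intros)
      moreover have "real (N-1) * t^(N-1-1) * u1 t + t^(N-1) * u2 t - g t = 0"
      proof -
        have E1: "real (N-1) * t^(N-1-1) = t^(N-1) * ((real N - 1) / t)"
        proof (cases "N = 1")
          case True then show ?thesis by simp
        next
          case False
          then obtain M where M: "N = Suc (Suc M)" using N by (cases N; cases "N - 1") auto
          then show ?thesis using t by (simp add: field_simps)
        qed
        have "real (N-1) * t^(N-1-1) * u1 t + t^(N-1) * u2 t - g t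
              = t^(N-1) * (u2 t - (R t - (real N - 1) / t * u1 t))"
          unfolding g_def E1 by (simp add: algebra_simps)
        also have "\<dots> = 0" using ode2[OF t] by simp
        finally show ?thesis .
      qed
      ultimately show ?thesis by simp
    qed
    have "P x = P 0" by (rule DERIV_isconst_end[OF that(1) Pc Pd])
    moreover have "P 0 = 0" using u10 by (cases N) (auto simp: P_def)
    ultimately have "P x = 0" by simp
    then have "x^(N-1) * u1 x = integral {0..x} g" by (simp add: P_def)
    moreover have "x^N = x^(N-1) * x" using N by (cases N) auto
    ultimately show ?thesis using that by (simp add: Tn_def g_def field_simps)
  qed
  have TRc: "continuous_on S (Tn N R)" using T_cont[OF N d(1) Rc[unfolded S_def]] by (simp add: S_def)
  have u2eq: "u2 x = R x - (real N - 1) * Tn N R x" if "x \<in> S" for x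
  proof (cases "x = 0")
    case False
    then have x: "0 < x" "x < \<delta>" using that by (auto simp: S_def)
    show ?thesis using ode2[OF x] u1T[OF x] x by simp
  next
    case True
    have "continuous_on {0..<\<delta>} (\<lambda>x. R x - (real N - 1) * Tn N R x)"
      using Rc TRc by (auto intro!: continuous_intros simp: S_def)
    from cont_eq_at0[OF d(1) d(7)[unfolded S_def] this] ode2 u1T
    show ?thesis unfolding True by simp
  qed
  have main: "Ck (Suc j) S u1" for j
  proof (induction j)
    case 0 then show ?case using d(6) d(7) by auto
  next
    case (Suc j)
    have wC: "Ck (Suc (Suc j)) S w" using d(5) Suc by auto
    have wp1: "Ck (Suc j) S (\<lambda>x. w x powr (1/m))" using Ck_powr Ck_Suc_imp wC wpos by blast
    have wp2: "Ck (Suc j) S (\<lambda>x. w x powr (1/m - 1))" using Ck_powr Ck_Suc_imp wC wpos by blast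
    have RC: "Ck (Suc j) S R" unfolding R_def
      by (intro Ck_diff Ck_cmult Ck_mult Ck_id wp1 wp2 Suc)
    have TC: "Ck (Suc j) S (Tn N R)" using T_Ck[OF N d(1) RC[unfolded S_def]] by (simp add: S_def)
    have "Ck (Suc j) S (\<lambda>x. R x - (real N - 1) * Tn N R x)" by (intro Ck_diff Ck_cmult RC TC)
    then have "Ck (Suc j) S u2" by (rule Ck_cong) (simp add: u2eq)
    then show ?case using d(6) by auto
  qed
  have "Ck k S u1" using Ck_Suc_imp main by blast
  then have "Ck (Suc k) S w" using d(5) by auto
  then show ?thesis using Ck_Suc_imp by (simp add: S_def w_def)
qed



definition Dop :: "(real \<Rightarrow> real) \<Rightarrow> real \<Rightarrow> real" where
  "Dop h x = vector_derivative h (at x within {0..})"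

lemma Dj_eq: "((\<lambda>h x. vector_derivative h (at x within {0..})) ^^ j) h = (Dop ^^ j) h"
  by (simp add: Dop_def[abs_def])

lemma at_local: "0 < (d::real) \<Longrightarrow> x \<in> {0..<d} \<Longrightarrow> at x within {0..} = at x within {0..<d}"
  by (rule at_within_nhd[of _ "{..<d}"]) auto

lemma Dop_step:
  assumes d: "0 < d" and h: "Ck (Suc k) {0..<d} h"
  shows "(\<forall>x\<in>{0..<d}. (h has_real_derivative Dop h x) (at x within {0..<d})) \<and> Ck k {0..<d} (Dop h)"
proof -
  obtain h' where h': "\<forall>x\<in>{0..<d}. (h has_real_derivative h' x) (at x within {0..<d})" "Ck k {0..<d} h'"
    using h by auto
  have eq: "Dop h x = h' x" if "x \<in> {0..<d}" for x
  proof -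
    have "(h has_vector_derivative h' x) (at x within {0..})"
      using h'(1) that at_local[OF d that] by (simp add: has_real_derivative_iff_has_vector_derivative)
    moreover have "at x within {0..} \<noteq> bot" using nb[OF d that] at_local[OF d that] by simp
    ultimately show ?thesis unfolding Dop_def by (intro vector_derivative_within)
  qed
  show ?thesis using h' eq Ck_cong[OF h'(2)] by simp
qed

lemma Dop_iter:
  assumes d: "0 < d" and h: "Ck K {0..<d} h" and j: "j \<le> K"
  shows "Ck (K - j) {0..<d} ((Dop ^^ j) h)"
  using j
proof (induction j)
  case 0 then show ?case using h by simp
next
  case (Suc j)
  then have "Ck (Suc (K - Suc j)) {0..<d} ((Dop ^^ j) h)" by (simp add: Suc_diff_Suc)
  then show ?case using Dop_step[OF d] by simp
qed

lemma Dop_iter_deriv: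
  assumes d: "0 < d" and h: "Ck K {0..<d} h" and j: "j < K" and x: "x \<in> {0..<d}"
  shows "((Dop ^^ j) h has_real_derivative (Dop ^^ Suc j) h x) (at x within {0..<d})"
proof -
  have "Ck (Suc (K - Suc j)) {0..<d} ((Dop ^^ j) h)" using Dop_iter[OF d h, of j] j
    by (simp add: Suc_diff_Suc)
  then show ?thesis using Dop_step[OF d] x by simp
qed

lemma cont_bound0:
  fixes g :: "real \<Rightarrow> real" and d :: real
  assumes d: "0 < d" and c: "continuous_on {0..<d} g"
  shows "\<exists>C r. 0 < r \<and> r \<le> d \<and> (\<forall>x. 0 \<le> x \<and> x < r \<longrightarrow> \<bar>g x\<bar> \<le> C)"
proof -
  have "continuous (at 0 within {0..<d}) g"
    using c d by (metis atLeastLessThan_iff continuous_on_eq_continuous_within order_refl)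
  then obtain r where r: "r > 0" "\<And>x. x \<in> {0..<d} \<Longrightarrow> dist x 0 < r \<Longrightarrow> dist (g x) (g 0) < 1"
    unfolding continuous_within_eps_delta by (metis zero_less_one)
  have "\<forall>x. 0 \<le> x \<and> x < min r d \<longrightarrow> \<bar>g x\<bar> \<le> \<bar>g 0\<bar> + 1"
  proof (intro allI impI)
    fix x assume x: "0 \<le> x \<and> x < min r d"
    then have "dist (g x) (g 0) < 1" using r(2)[of x] by (auto simp: dist_real_def)
    then show "\<bar>g x\<bar> \<le> \<bar>g 0\<bar> + 1" by (simp add: dist_real_def)
  qed
  then show ?thesis using r d by (intro exI[of _ "\<bar>g 0\<bar> + 1"] exI[of _ "min r d"]) auto
qed

lemma taylor_bound:
  assumes d: "0 < d" and h: "Ck (Suc K) {0..<d} h"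
  shows "\<exists>C r. 0 < r \<and> (\<forall>x. 0 < x \<and> x < r \<longrightarrow>
           \<bar>h x - (\<Sum>j\<le>K. (Dop ^^ j) h 0 / fact j * x ^ j)\<bar> \<le> C * x ^ Suc K)"
  using h
proof (induction K arbitrary: h)
  case 0
  have dd: "\<forall>x\<in>{0..<d}. (h has_real_derivative Dop h x) (at x within {0..<d})" "Ck 0 {0..<d} (Dop h)"
    using Dop_step[OF d 0] by auto
  obtain C r where Cr: "0 < r" "r \<le> d" "\<And>x. 0 \<le> x \<Longrightarrow> x < r \<Longrightarrow> \<bar>Dop h x\<bar> \<le> C"
    using cont_bound0[OF d dd(2)[simplified]] by blast
  have "\<bar>h x - h 0\<bar> \<le> C * x" if x: "0 < x" "x < r" for x
  proof (rule mvt_bound[OF x(1)])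
    show "continuous_on {0..x} h"
      using dd(1) x Cr(2) by (intro DERIV_continuous_on[of _ _ "Dop h"])
         (auto intro: has_field_derivative_subset[of _ _ _ "{0..<d}"])
    show "(h has_real_derivative Dop h t) (at t)" if "0 < t" "t < x" for t
      using within_to_at[of h "Dop h t" t d] dd(1) that x Cr(2) by auto
    show "\<bar>Dop h t\<bar> \<le> C" if "0 < t" "t < x" for t using Cr(3) that x by auto
  qed
  then show ?case using Cr(1) by (intro exI[of _ C] exI[of _ r]) auto
next
  case (Suc K)
  have dd: "\<forall>x\<in>{0..<d}. (h has_real_derivative Dop h x) (at x within {0..<d})" "Ck (Suc K) {0..<d} (Dop h)"
    using Dop_step[OF d Suc.prems] by auto
  obtain C r where Cr: "0 < r" "\<And>x. 0 < x \<Longrightarrow> x < r \<Longrightarrow>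
      \<bar>Dop h x - (\<Sum>j\<le>K. (Dop ^^ j) (Dop h) 0 / fact j * x ^ j)\<bar> \<le> C * x ^ Suc K"
    using Suc.IH[OF dd(2)] by auto
  define r' where "r' = min r d"
  define a where "a j = (Dop ^^ j) h 0 / fact j" for j
  define E where "E x = h x - (\<Sum>j\<le>Suc K. a j * x ^ j)" for x
  have Esplit: "E x = h x - a 0 - (\<Sum>i\<le>K. a (Suc i) * x ^ Suc i)" for x
    unfolding E_def sum.atMost_Suc_shift by simp
  have iter: "(Dop ^^ i) (Dop h) = (Dop ^^ Suc i) h" for i by (simp only: funpow_Suc_right o_apply)
  have "\<bar>E x - E 0\<bar> \<le> (C * x ^ Suc K) * x" if x: "0 < x" "x < r'" for x
  proof (rule mvt_bound[OF x(1)])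
    show "continuous_on {0..x} E"
      unfolding E_def using DERIV_continuous_on[OF dd(1)[rule_format]] x
      by (auto intro!: continuous_intros intro: continuous_on_subset simp: r'_def)
    show "(E has_real_derivative (Dop h t - (\<Sum>i\<le>K. a (Suc i) * (real (Suc i) * t ^ i)))) (at t)"
      if t: "0 < t" "t < x" for t
    proof -
      have "(h has_real_derivative Dop h t) (at t)"
        using within_to_at[of h "Dop h t" t d] dd(1) t x by (auto simp: r'_def)
      then have "((\<lambda>x. h x - a 0 - (\<Sum>i\<le>K. a (Suc i) * x ^ Suc i)) has_real_derivative
          (Dop h t - 0 - (\<Sum>i\<le>K. a (Suc i) * (real (Suc i) * t ^ i)))) (at t)"
      proof -
        have "((\<lambda>x. a (Suc i) * x ^ Suc i) has_real_derivative a (Suc i) * (real (Suc i) * t ^ i)) (at t)" for i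
          using DERIV_cmult[OF DERIV_pow[of "Suc i" t], of "a (Suc i)"] by simp
        then show ?thesis using \<open>(h has_real_derivative Dop h t) (at t)\<close>
          by (intro DERIV_diff DERIV_sum DERIV_const) auto
      qed
      then show ?thesis unfolding Esplit[abs_def] by simp
    qed
    show "\<bar>Dop h t - (\<Sum>i\<le>K. a (Suc i) * (real (Suc i) * t ^ i))\<bar> \<le> C * x ^ Suc K"
      if t: "0 < t" "t < x" for t
    proof -
      have "a (Suc i) * real (Suc i) = (Dop ^^ i) (Dop h) 0 / fact i" for i
      proof -
        have "a (Suc i) * real (Suc i) = (Dop ^^ Suc i) h 0 / (real (Suc i) * fact i) * real (Suc i)"
          unfolding a_def by (simp only: fact_Suc)
        also have "\<dots> = (Dop ^^ Suc i) h 0 / fact i" by simp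
        finally show ?thesis by (simp only: iter)
      qed
      then have sumeq: "(\<Sum>i\<le>K. a (Suc i) * (real (Suc i) * t ^ i)) = (\<Sum>i\<le>K. (Dop ^^ i) (Dop h) 0 / fact i * t ^ i)"
        by (intro sum.cong) (auto simp: mult.assoc[symmetric])
      have tr: "0 < t" "t < r" using t x by (auto simp: r'_def)
      have b: "\<bar>Dop h t - (\<Sum>j\<le>K. (Dop ^^ j) (Dop h) 0 / fact j * t ^ j)\<bar> \<le> C * t ^ Suc K"
        by (rule Cr(2)[OF tr])
      have "0 \<le> C * t ^ Suc K" using b by (meson abs_ge_zero order_trans)
      moreover have tp: "t ^ Suc K > 0" using tr by simp
      ultimately have C0: "C \<ge> 0" using mult_neg_pos[of C "t ^ Suc K"] by linarith
      have Ct: "C * t ^ Suc K \<le> C * x ^ Suc K"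
        using t C0 by (intro mult_left_mono power_mono) auto
      show ?thesis unfolding sumeq using b Ct by linarith
    qed
  qed
  moreover have "E 0 = 0" by (simp add: E_def a_def sum.atMost_Suc_shift)
  ultimately have Ex: "\<bar>E x\<bar> \<le> C * x ^ Suc (Suc K)" if "0 < x" "x < r'" for x
  proof -
    have A1: "\<bar>E x - E 0\<bar> \<le> (C * x ^ Suc K) * x" using that \<open>\<And>x. 0 < x \<Longrightarrow> x < r' \<Longrightarrow> _\<close> by blast
    have A2: "(C * x ^ Suc K) * x = C * x ^ Suc (Suc K)" by (simp only: power_Suc2[of x "Suc K"] mult.assoc)
    have "\<bar>E x\<bar> \<le> (C * x ^ Suc K) * x" using A1 \<open>E 0 = 0\<close> by simp
    then show ?thesis unfolding A2 .
  qed
  have r'0: "0 < r'" using Cr(1) d by (simp add: r'_def)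
  have "\<forall>x. 0 < x \<and> x < r' \<longrightarrow> \<bar>h x - (\<Sum>j\<le>Suc K. (Dop ^^ j) h 0 / fact j * x ^ j)\<bar> \<le> C * x ^ Suc (Suc K)"
    using Ex unfolding E_def a_def by simp
  then show ?case using r'0 by blast
qed



lemma profile_data:
  assumes sol: "is_profile N m \<sigma> p c A f xm" and d: "0 < d" "d \<le> xm" and m: "m > 1"
  obtains f1 u1 u2 where
    "f 0 = A" "\<forall>x\<in>{0..<d}. f x > 0" "f1 0 = 0"
    "\<forall>x\<in>{0..<d}. (f has_real_derivative f1 x) (at x within {0..<d})"
    "\<forall>x\<in>{0..<d}. ((\<lambda>x. f x powr m) has_real_derivative u1 x) (at x within {0..<d})"
    "\<forall>x\<in>{0..<d}. (u1 has_real_derivative u2 x) (at x within {0..<d})"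
    "continuous_on {0..<d} u2"
    "u1 0 = 0"
    "\<forall>x\<in>{0..<d}. u1 x = m * f x powr (m - 1) * f1 x"
    "\<forall>x. 0 < x \<and> x < d \<longrightarrow> u2 x + (real N - 1) / x * u1 x + alpha m \<sigma> p * f x
        + beta m \<sigma> p * x * f1 x - c * x powr \<sigma> * f x powr p = 0"
proof -
  define S where "S = {0..<d}"
  have sub: "S \<subseteq> {0..<xm}" using d by (auto simp: S_def)
  obtain f1 u1 u2 where h: "f 0 = A" "\<forall>\<xi>\<in>{0..<xm}. 0 < f \<xi>" "f1 0 = 0"
    "\<forall>\<xi>\<in>{0..<xm}. (f has_real_derivative f1 \<xi>) (at \<xi> within {0..<xm})"
    "\<forall>\<xi>\<in>{0..<xm}. ((\<lambda>x. f x powr m) has_real_derivative u1 \<xi>) (at \<xi> within {0..<xm})"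
    "\<forall>\<xi>\<in>{0..<xm}. (u1 has_real_derivative u2 \<xi>) (at \<xi> within {0..<xm})"
    "continuous_on {0..<xm} u2"
    "\<forall>\<xi>\<in>{0<..<xm}. u2 \<xi> + (real N - 1) / \<xi> * u1 \<xi> + alpha m \<sigma> p * f \<xi>
           + beta m \<sigma> p * \<xi> * f1 \<xi> - c * \<xi> powr \<sigma> * f \<xi> powr p = 0"
    using sol unfolding is_profile_def by blast
  have pos: "\<forall>x\<in>S. f x > 0" using h(2) sub by blast
  have df: "\<forall>x\<in>S. (f has_real_derivative f1 x) (at x within S)"
    using h(4) sub by (meson has_field_derivative_subset subsetD)
  have dw: "\<forall>x\<in>S. ((\<lambda>x. f x powr m) has_real_derivative u1 x) (at x within S)"
    using h(5) sub by (meson has_field_derivative_subset subsetD)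
  have du: "\<forall>x\<in>S. (u1 has_real_derivative u2 x) (at x within S)"
    using h(6) sub by (meson has_field_derivative_subset subsetD)
  have cu: "continuous_on S u2" using h(7) sub continuous_on_subset by blast
  have u1eq: "\<forall>x\<in>S. u1 x = m * f x powr (m - 1) * f1 x"
  proof
    fix x assume x: "x \<in> S"
    have "((\<lambda>x. f x powr m) has_real_derivative m * f x powr (m - 1) * f1 x) (at x within S)"
      using df pos x by (auto intro!: derivative_eq_intros)
    moreover have "((\<lambda>x. f x powr m) has_real_derivative u1 x) (at x within S)" using dw x by blast
    moreover have "at x within S \<noteq> bot" using nb[OF d(1)] x by (simp add: S_def)
    ultimately have "m * f x powr (m - 1) * f1 x = u1 x" by (rule has_field_derivative_unique)
    then show "u1 x = m * f x powr (m - 1) * f1 x" by simp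
  qed
  have "0 \<in> S" using d by (simp add: S_def)
  then have u10: "u1 0 = 0" using u1eq h(3) by simp
  have ode: "\<forall>x. 0 < x \<and> x < d \<longrightarrow> u2 x + (real N - 1) / x * u1 x + alpha m \<sigma> p * f x
        + beta m \<sigma> p * x * f1 x - c * x powr \<sigma> * f x powr p = 0"
    using h(8) d by auto
  show ?thesis
    by (rule that[OF h(1) pos[unfolded S_def] h(3) df[unfolded S_def] dw[unfolded S_def]
          du[unfolded S_def] cu[unfolded S_def] u10 u1eq[unfolded S_def] ode])
qed

lemma mvt_bound2:
  fixes E :: "real \<Rightarrow> real"
  assumes "a < b" "continuous_on {a..b} E"
    "\<And>t. a < t \<Longrightarrow> t < b \<Longrightarrow> (E has_real_derivative E' t) (at t)"
    "\<And>t. a < t \<Longrightarrow> t < b \<Longrightarrow> \<bar>E' t\<bar> \<le> B"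
  shows "\<bar>E b - E a\<bar> \<le> B * (b - a)"
proof -
  obtain l z where z: "a < z" "z < b" "DERIV E z :> l" "E b - E a = (b - a) * l"
    using MVT[OF assms(1) assms(2)] assms(3) real_differentiable_def by blast
  have "l = E' z" using DERIV_unique[OF z(3) assms(3)[OF z(1,2)]] .
  then have "\<bar>E b - E a\<bar> = (b - a) * \<bar>E' z\<bar>" using z(4) assms(1) by (simp add: abs_mult)
  also have "\<dots> \<le> (b - a) * B" using assms(4)[OF z(1,2)] assms(1) by (intro mult_left_mono) auto
  finally show ?thesis by (simp add: mult.commute)
qed

lemma powr_lip1:
  fixes a x y q :: real
  assumes a: "0 < a" "a \<le> x" "x < y" and q: "0 < q" "q < 1"
  shows "\<bar>y powr q - x powr q\<bar> \<le> q * a powr (q - 1) * (y - x)"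
proof (rule mvt_bound2[OF a(3)])
  show "continuous_on {x..y} (\<lambda>t. t powr q)" using a by (auto intro!: continuous_intros)
  show "((\<lambda>t. t powr q) has_real_derivative q * t powr (q - 1)) (at t)" if "x < t" "t < y" for t
    using that a by (auto intro!: derivative_eq_intros)
  show "\<bar>q * t powr (q - 1)\<bar> \<le> q * a powr (q - 1)" if "x < t" "t < y" for t
  proof -
    have "t powr (q - 1) \<le> a powr (q - 1)" using that a q by (intro powr_mono2') auto
    then show ?thesis using q by (simp add: abs_mult)
  qed
qed

lemma powr_lip:
  fixes a x y q :: real
  assumes a: "0 < a" "a \<le> x" "a \<le> y" and q: "0 < q" "q < 1"
  shows "\<bar>x powr q - y powr q\<bar> \<le> q * a powr (q - 1) * \<bar>x - y\<bar>"
proof -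
  consider "x < y" | "x = y" | "y < x" by linarith
  then show ?thesis
  proof cases
    case 1 then show ?thesis using powr_lip1[OF a(1,2) 1 q] by (simp add: abs_minus_commute)
  next
    case 2 then show ?thesis by simp
  next
    case 3 then show ?thesis using powr_lip1[OF a(1,3) 3 q] by simp
  qed
qed



lemma core1:
  fixes D D1 Dl fp E :: "real \<Rightarrow> real" and N :: nat
  assumes d: "0 < d" and N: "N \<ge> 1" and \<sigma>: "\<sigma> > 0"
    and Dc: "continuous_on {0..<d} D" and D0: "D 0 = 0"
    and Dd: "\<And>t. 0 < t \<Longrightarrow> t < d \<Longrightarrow> (D has_real_derivative D1 t) (at t)"
    and Ec: "continuous_on {0..<d} E" and E0: "E 0 = 0"
    and Ed: "\<And>t. 0 < t \<Longrightarrow> t < d \<Longrightarrow> (E has_real_derivative t^(N-1) * (t powr \<sigma> * fp t + c0 * Dl t)) (at t)"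
    and Eeq: "\<And>t. 0 < t \<Longrightarrow> t < d \<Longrightarrow> E t = t^(N-1) * D1 t + be * t^N * Dl t"
    and Lip: "\<And>t. 0 \<le> t \<Longrightarrow> t < d \<Longrightarrow> \<bar>Dl t\<bar> \<le> L * \<bar>D t\<bar>" and L: "L \<ge> 0"
    and fpb: "\<And>t. 0 \<le> t \<Longrightarrow> t < d \<Longrightarrow> \<bar>fp t\<bar> \<le> P0"
  shows "\<exists>r K. 0 < r \<and> (\<forall>x. 0 < x \<and> x < r \<longrightarrow> \<bar>D x\<bar> \<le> K * x powr (\<sigma> + 2))"
proof -
  define c2 where "c2 = (\<bar>c0\<bar> + \<bar>be\<bar>) * L"
  have c2: "c2 \<ge> 0" using L by (simp add: c2_def)
  define r where "r = min d (1 / sqrt (2 * c2 + 1))"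
  have r0: "0 < r" using d c2 by (simp add: r_def)
  have rd: "r \<le> d" by (simp add: r_def)
  have rc: "x^2 * c2 \<le> 1/2" if "0 < x" "x < r" for x
  proof -
    have "x < 1 / sqrt (2 * c2 + 1)" using that by (simp add: r_def)
    then have "x^2 < (1 / sqrt (2 * c2 + 1))^2" using that by (intro power_strict_mono) auto
    also have "\<dots> = 1 / (2 * c2 + 1)" using c2 by (simp add: power_divide)
    finally have "x^2 * (2 * c2 + 1) < 1" using c2 by (simp add: field_simps)
    moreover have "x^2 * (2 * c2 + 1) = 2 * (x^2 * c2) + x^2" by (simp add: algebra_simps)
    moreover have "x^2 \<ge> 0" by simp
    ultimately show ?thesis by linarith
  qed
  have P0: "P0 \<ge> 0" using fpb[of 0] d by auto
  have main: "\<bar>D x0\<bar> \<le> (2 * P0) * x0 powr (\<sigma> + 2)" if x0: "0 < x0" "x0 < r" for x0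
  proof -
    have x0d: "x0 < d" using x0 rd by simp
    have "continuous_on {0..x0} (\<lambda>y. \<bar>D y\<bar>)"
      using Dc x0d by (auto intro!: continuous_intros intro: continuous_on_subset)
    then obtain ts where ts: "ts \<in> {0..x0}" "\<And>y. y \<in> {0..x0} \<Longrightarrow> \<bar>D y\<bar> \<le> \<bar>D ts\<bar>"
      using continuous_attains_sup[of "{0..x0}" "\<lambda>y. \<bar>D y\<bar>"] x0 by auto
    define M where "M = \<bar>D ts\<bar>"
    have M: "M \<ge> 0" by (simp add: M_def)
    define B where "B = x0 powr \<sigma> * P0 + \<bar>c0\<bar> * L * M"
    have B: "B \<ge> 0" using P0 L M by (simp add: B_def)
    have Ebound: "\<bar>E s\<bar> \<le> s^N * B" if s: "0 < s" "s \<le> x0" for s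
    proof -
      have "\<bar>E s - E 0\<bar> \<le> s^(N-1) * B * s"
      proof (rule mvt_bound[OF s(1)])
        show "continuous_on {0..s} E" using Ec s x0d by (auto intro: continuous_on_subset)
        show "(E has_real_derivative t^(N-1) * (t powr \<sigma> * fp t + c0 * Dl t)) (at t)" if "0 < t" "t < s" for t
          using Ed that s x0d by auto
        show "\<bar>t^(N-1) * (t powr \<sigma> * fp t + c0 * Dl t)\<bar> \<le> s^(N-1) * B" if t: "0 < t" "t < s" for t
        proof -
          have tl: "t < d" using t s x0d by auto
          have "\<bar>t powr \<sigma> * fp t\<bar> \<le> x0 powr \<sigma> * P0"
          proof -
            have "\<bar>t powr \<sigma> * fp t\<bar> = t powr \<sigma> * \<bar>fp t\<bar>" by (simp add: abs_mult)
            also have "\<dots> \<le> x0 powr \<sigma> * P0"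
              using fpb[of t] t tl s \<sigma> by (intro mult_mono powr_mono2) auto
            finally show ?thesis .
          qed
          moreover have "\<bar>c0 * Dl t\<bar> \<le> \<bar>c0\<bar> * L * M"
          proof -
            have "\<bar>Dl t\<bar> \<le> L * \<bar>D t\<bar>" using Lip[of t] t tl by auto
            also have "\<dots> \<le> L * M" using ts(2)[of t] t s L unfolding M_def by (intro mult_left_mono) auto
            finally show ?thesis by (simp add: abs_mult mult.assoc mult_left_mono)
          qed
          ultimately have "\<bar>t powr \<sigma> * fp t + c0 * Dl t\<bar> \<le> B" unfolding B_def by linarith
          then have "\<bar>t^(N-1) * (t powr \<sigma> * fp t + c0 * Dl t)\<bar> \<le> t^(N-1) * B"
            using t by (simp add: abs_mult mult_left_mono)
          also have "\<dots> \<le> s^(N-1) * B" using t B by (intro mult_right_mono power_mono) auto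
          finally show ?thesis .
        qed
      qed
      moreover have "s^(N-1) * B * s = s^N * B" using N by (cases N) (auto simp: algebra_simps)
      ultimately show ?thesis using E0 by (metis diff_zero)
    qed
    have D1bound: "\<bar>D1 s\<bar> \<le> s * (B + \<bar>be\<bar> * L * M)" if s: "0 < s" "s \<le> x0" for s
    proof -
      have sd: "s < d" using s x0d by auto
      have "s^(N-1) * D1 s = E s - be * s^N * Dl s" using Eeq[OF s(1) sd] by simp
      moreover have "\<bar>be * s^N * Dl s\<bar> = \<bar>be\<bar> * s^N * \<bar>Dl s\<bar>" using s by (simp add: abs_mult)
      ultimately have "\<bar>s^(N-1) * D1 s\<bar> \<le> \<bar>E s\<bar> + \<bar>be\<bar> * s^N * \<bar>Dl s\<bar>"
        using abs_triangle_ineq4[of "E s" "be * s^N * Dl s"] by simp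
      also have "\<dots> \<le> s^N * B + \<bar>be\<bar> * s^N * (L * M)"
      proof -
        have "\<bar>Dl s\<bar> \<le> L * \<bar>D s\<bar>" using Lip[of s] s sd by auto
        also have "\<dots> \<le> L * M" using ts(2)[of s] s L unfolding M_def by (intro mult_left_mono) auto
        finally have "\<bar>Dl s\<bar> \<le> L * M" .
        then have "\<bar>be\<bar> * s^N * \<bar>Dl s\<bar> \<le> \<bar>be\<bar> * s^N * (L * M)" using s by (intro mult_left_mono) auto
        then show ?thesis using Ebound[OF s] by linarith
      qed
      also have "\<dots> = s^(N-1) * (s * (B + \<bar>be\<bar> * L * M))"
        using N by (cases N) (auto simp: algebra_simps)
      finally have "s^(N-1) * \<bar>D1 s\<bar> \<le> s^(N-1) * (s * (B + \<bar>be\<bar> * L * M))" using s by (simp add: abs_mult)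
      then show ?thesis using s by (simp add: mult_le_cancel_left_pos)
    qed
    have Dbound: "\<bar>D t\<bar> \<le> x0^2 * (B + \<bar>be\<bar> * L * M)" if t: "0 \<le> t" "t \<le> x0" for t
    proof (cases "t = 0")
      case True then show ?thesis using D0 B L M by simp
    next
      case False
      then have t0: "0 < t" using t by simp
      have "\<bar>D t - D 0\<bar> \<le> x0 * (B + \<bar>be\<bar> * L * M) * t"
      proof (rule mvt_bound[OF t0])
        show "continuous_on {0..t} D" using Dc t x0d by (auto intro: continuous_on_subset)
        show "(D has_real_derivative D1 s) (at s)" if "0 < s" "s < t" for s using Dd that t x0d by auto
        show "\<bar>D1 s\<bar> \<le> x0 * (B + \<bar>be\<bar> * L * M)" if "0 < s" "s < t" for s
        proof -
          have "\<bar>D1 s\<bar> \<le> s * (B + \<bar>be\<bar> * L * M)" using D1bound[of s] that t by auto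
          also have "\<dots> \<le> x0 * (B + \<bar>be\<bar> * L * M)" using that t B L M by (intro mult_right_mono) auto
          finally show ?thesis .
        qed
      qed
      then have "\<bar>D t\<bar> \<le> x0 * (B + \<bar>be\<bar> * L * M) * t" using D0 by simp
      also have "\<dots> \<le> x0 * (B + \<bar>be\<bar> * L * M) * x0"
        using t B L M x0 by (intro mult_left_mono) auto
      finally show ?thesis by (simp add: power2_eq_square algebra_simps)
    qed
    have "M \<le> x0^2 * (B + \<bar>be\<bar> * L * M)" using Dbound ts(1) unfolding M_def by auto
    also have "\<dots> = x0^2 * x0 powr \<sigma> * P0 + (x0^2 * c2) * M"
      by (simp add: B_def c2_def algebra_simps)
    also have "\<dots> \<le> x0^2 * x0 powr \<sigma> * P0 + M / 2"
    proof -
      have "(x0^2 * c2) * M \<le> (1/2) * M" using rc[OF x0] M by (rule mult_right_mono)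
      then show ?thesis by simp
    qed
    finally have M2: "M \<le> x0^2 * x0 powr \<sigma> * P0 + M / 2" .
    have "2 * P0 * (x0 powr \<sigma> * x0^2) = 2 * (x0^2 * x0 powr \<sigma> * P0)" by (simp add: algebra_simps)
    then have "M \<le> 2 * P0 * (x0 powr \<sigma> * x0^2)" using M2 by linarith
    moreover have "x0 powr \<sigma> * x0^2 = x0 powr (\<sigma> + 2)" using x0 by (simp add: powr_add powr_numeral)
    moreover have "\<bar>D x0\<bar> \<le> M" using ts(2)[of x0] x0 unfolding M_def by auto
    ultimately show ?thesis by simp
  qed
  show ?thesis using main r0 by blast
qed



lemma pw: "0 < (t::real) \<Longrightarrow> t powr (s + real k) = t powr s * t ^ k"
  by (simp add: powr_add powr_realpow)

lemma pw2: "0 < (t::real) \<Longrightarrow> t powr (s + 2) = t powr s * t ^ 2"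
  using pw[of t s 2] by simp

lemma pw1: "0 < (t::real) \<Longrightarrow> t powr (s + 1) = t powr s * t"
  using pw[of t s 1] by simp

lemma powr_deriv_at: "0 < (t::real) \<Longrightarrow> ((\<lambda>t. t powr a) has_real_derivative a * t powr (a - 1)) (at t)"
  by (rule has_real_derivative_powr)

lemma aux_cancel: "(c::real) \<noteq> 0 \<Longrightarrow> a / (c * b) * (c * X) = a / b * X"
  by simp

lemma core2:
  fixes D D1 Dl fp E :: "real \<Rightarrow> real" and N :: nat
  assumes d: "0 < d" and N: "N \<ge> 1" and \<sigma>: "\<sigma> > 0"
    and Dc: "continuous_on {0..<d} D" and D0: "D 0 = 0"
    and Dd: "\<And>t. 0 < t \<Longrightarrow> t < d \<Longrightarrow> (D has_real_derivative D1 t) (at t)"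
    and Ec: "continuous_on {0..<d} E" and E0: "E 0 = 0"
    and Ed: "\<And>t. 0 < t \<Longrightarrow> t < d \<Longrightarrow> (E has_real_derivative t^(N-1) * (t powr \<sigma> * fp t + c0 * Dl t)) (at t)"
    and Eeq: "\<And>t. 0 < t \<Longrightarrow> t < d \<Longrightarrow> E t = t^(N-1) * D1 t + be * t^N * Dl t"
    and Lip: "\<And>t. 0 \<le> t \<Longrightarrow> t < d \<Longrightarrow> \<bar>Dl t\<bar> \<le> L * \<bar>D t\<bar>" and L: "L \<ge> 0"
    and fpb: "\<And>t. 0 \<le> t \<Longrightarrow> t < d \<Longrightarrow> \<bar>fp t\<bar> \<le> P0"
    and fpc: "\<And>e. e > 0 \<Longrightarrow> \<exists>r>0. \<forall>t. 0 < t \<and> t < r \<longrightarrow> \<bar>fp t - a0\<bar> \<le> e"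
    and e: "e > 0"
  shows "\<exists>r>0. \<forall>x. 0 < x \<and> x < r \<longrightarrow>
           \<bar>D x - a0 / ((\<sigma> + 2) * (\<sigma> + real N)) * x powr (\<sigma> + 2)\<bar> \<le> e * x powr (\<sigma> + 2)"
proof -
  obtain r2 K0 where r2: "0 < r2" "\<And>x. 0 < x \<Longrightarrow> x < r2 \<Longrightarrow> \<bar>D x\<bar> \<le> K0 * x powr (\<sigma> + 2)"
    using core1[OF d N \<sigma> Dc D0 Dd Ec E0 Ed Eeq Lip L fpb] by blast
  define K where "K = \<bar>K0\<bar>"
  have K: "K \<ge> 0" by (simp add: K_def)
  have Kb: "\<bar>D x\<bar> \<le> K * (x powr \<sigma> * x^2)" if "0 < x" "x < r2" for x
  proof -
    have "\<bar>D x\<bar> \<le> K0 * x powr (\<sigma> + 2)" using r2(2) that by blast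
    also have "\<dots> \<le> K * x powr (\<sigma> + 2)" unfolding K_def by (intro mult_right_mono) auto
    finally show ?thesis using pw2[OF that(1)] by simp
  qed
  define e' where "e' = e / 2"
  have e': "e' > 0" using e by (simp add: e'_def)
  obtain r3 where r3: "r3 > 0" "\<And>t. 0 < t \<Longrightarrow> t < r3 \<Longrightarrow> \<bar>fp t - a0\<bar> \<le> e'"
    using fpc[OF e'] by blast
  define c3 where "c3 = (\<bar>c0\<bar> + \<bar>be\<bar>) * L * K"
  have c3: "c3 \<ge> 0" using L K by (simp add: c3_def)
  define r where "r = min (min r2 r3) (min d (sqrt (e' / (c3 + 1))))"
  have r0: "r > 0" using r2 r3 d e' c3 by (simp add: r_def)
  have rc: "c3 * x^2 \<le> e'" if "0 < x" "x < r" for x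
  proof -
    have "x < sqrt (e' / (c3 + 1))" using that by (simp add: r_def)
    then have "x^2 < (sqrt (e' / (c3 + 1)))^2" using that by (intro power_strict_mono) auto
    also have "\<dots> = e' / (c3 + 1)" using e' c3 by simp
    finally have "x^2 * (c3 + 1) < e'" using c3 by (simp add: field_simps)
    moreover have "x^2 * (c3 + 1) = c3 * x^2 + x^2" by (simp add: algebra_simps)
    moreover have "x^2 \<ge> 0" by simp
    ultimately show ?thesis by linarith
  qed
  have \<sigma>N: "\<sigma> + real N > 0" using \<sigma> by simp
  have main: "\<bar>D x - a0 / ((\<sigma> + 2) * (\<sigma> + real N)) * x powr (\<sigma> + 2)\<bar> \<le> e * x powr (\<sigma> + 2)"
    if x: "0 < x" "x < r" for x
  proof -
    have xd: "x < d" "x < r2" "x < r3" using x by (auto simp: r_def)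
    define G where "G t = E t - a0 / (\<sigma> + real N) * t powr (\<sigma> + real N)" for t
    have Gd: "(G has_real_derivative t^(N-1) * (t powr \<sigma> * (fp t - a0) + c0 * Dl t)) (at t)"
      if t: "0 < t" "t < d" for t
    proof -
      have "(G has_real_derivative t^(N-1) * (t powr \<sigma> * fp t + c0 * Dl t)
               - a0 / (\<sigma> + real N) * ((\<sigma> + real N) * t powr (\<sigma> + real N - 1))) (at t)"
        unfolding G_def[abs_def] using Ed[OF t] powr_deriv_at[OF t(1), of "\<sigma> + real N"]
        by (intro DERIV_diff DERIV_cmult) auto
      moreover have "t powr (\<sigma> + real N - 1) = t powr \<sigma> * t^(N-1)"
        using pw[OF t(1), of \<sigma> "N - 1"] N by (simp add: of_nat_diff algebra_simps)
      moreover have "a0 / (\<sigma> + real N) * ((\<sigma> + real N) * t powr (\<sigma> + real N - 1)) = a0 * t powr (\<sigma> + real N - 1)"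
        using \<sigma>N by simp
      moreover have "t^(N-1) * (t powr \<sigma> * fp t + c0 * Dl t) - a0 * (t powr \<sigma> * t^(N-1))
          = t^(N-1) * (t powr \<sigma> * (fp t - a0) + c0 * Dl t)" by (simp add: algebra_simps)
      ultimately show ?thesis by metis
    qed
    have Gb: "\<bar>G s\<bar> \<le> s^N * (s powr \<sigma> * (e' + \<bar>c0\<bar> * L * K * s^2))" if s: "0 < s" "s \<le> x" for s
    proof -
      have "\<bar>G s - G 0\<bar> \<le> s^(N-1) * (s powr \<sigma> * (e' + \<bar>c0\<bar> * L * K * s^2)) * s"
      proof (rule mvt_bound[OF s(1)])
        show "continuous_on {0..s} G" unfolding G_def
          using Ec s xd \<sigma>N
          by (auto intro!: continuous_intros continuous_on_powr' intro: continuous_on_subset)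
        show "(G has_real_derivative t^(N-1) * (t powr \<sigma> * (fp t - a0) + c0 * Dl t)) (at t)"
          if "0 < t" "t < s" for t using Gd that s xd by auto
        show "\<bar>t^(N-1) * (t powr \<sigma> * (fp t - a0) + c0 * Dl t)\<bar> \<le> s^(N-1) * (s powr \<sigma> * (e' + \<bar>c0\<bar> * L * K * s^2))"
          if t: "0 < t" "t < s" for t
        proof -
          have tl: "t < d" "t < r2" "t < r3" using t s xd by auto
          have ts: "t powr \<sigma> \<le> s powr \<sigma>" using t \<sigma> by (intro powr_mono2) auto
          have a1: "\<bar>t powr \<sigma> * (fp t - a0)\<bar> \<le> s powr \<sigma> * e'"
          proof -
            have "\<bar>t powr \<sigma> * (fp t - a0)\<bar> = t powr \<sigma> * \<bar>fp t - a0\<bar>" by (simp add: abs_mult)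
            also have "\<dots> \<le> s powr \<sigma> * e'" using r3(2)[OF t(1) tl(3)] ts e' by (intro mult_mono) auto
            finally show ?thesis .
          qed
          have a2: "\<bar>c0 * Dl t\<bar> \<le> \<bar>c0\<bar> * L * K * (s powr \<sigma> * s^2)"
          proof -
            have "\<bar>Dl t\<bar> \<le> L * \<bar>D t\<bar>" using Lip[of t] t tl by auto
            also have "\<dots> \<le> L * (K * (t powr \<sigma> * t^2))" using Kb[OF t(1) tl(2)] L by (intro mult_left_mono)
            also have "\<dots> \<le> L * (K * (s powr \<sigma> * s^2))"
              using ts t L K by (intro mult_left_mono mult_mono power_mono) auto
            finally have "\<bar>Dl t\<bar> \<le> L * (K * (s powr \<sigma> * s^2))" .
            then have "\<bar>c0\<bar> * \<bar>Dl t\<bar> \<le> \<bar>c0\<bar> * (L * (K * (s powr \<sigma> * s^2)))" by (intro mult_left_mono) auto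
            then show ?thesis by (simp add: abs_mult mult.assoc)
          qed
          have "\<bar>t powr \<sigma> * (fp t - a0) + c0 * Dl t\<bar> \<le> s powr \<sigma> * (e' + \<bar>c0\<bar> * L * K * s^2)"
            using a1 a2 by (simp add: algebra_simps) linarith?
          then have "\<bar>t powr \<sigma> * (fp t - a0) + c0 * Dl t\<bar> \<le> s powr \<sigma> * (e' + \<bar>c0\<bar> * L * K * s^2)"
            using a1 a2 abs_triangle_ineq[of "t powr \<sigma> * (fp t - a0)" "c0 * Dl t"]
            by (simp add: algebra_simps)
          then have "\<bar>t^(N-1) * (t powr \<sigma> * (fp t - a0) + c0 * Dl t)\<bar> \<le> t^(N-1) * (s powr \<sigma> * (e' + \<bar>c0\<bar> * L * K * s^2))"
            using t by (simp add: abs_mult mult_left_mono)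
          also have "\<dots> \<le> s^(N-1) * (s powr \<sigma> * (e' + \<bar>c0\<bar> * L * K * s^2))"
            using t e' L K by (intro mult_right_mono power_mono) auto
          finally show ?thesis .
        qed
      qed
      moreover have "G 0 = 0" using E0 \<sigma>N by (simp add: G_def)
      moreover have "s^(N-1) * (s powr \<sigma> * (e' + \<bar>c0\<bar> * L * K * s^2)) * s = s^N * (s powr \<sigma> * (e' + \<bar>c0\<bar> * L * K * s^2))"
        using N by (cases N) (auto simp: algebra_simps)
      ultimately show ?thesis by (metis diff_zero)
    qed
    define Q where "Q s = D1 s - a0 / (\<sigma> + real N) * s powr (\<sigma> + 1)" for s
    have Qb: "\<bar>Q s\<bar> \<le> x * x powr \<sigma> * (2 * e')" if s: "0 < s" "s < x" for s
    proof -
      have sd: "s < d" "s < r2" using s xd by auto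
      have "s^(N-1) * Q s = G s - be * s^N * Dl s"
      proof -
        have "s^(N-1) * s powr (\<sigma> + 1) = s powr (\<sigma> + real N)"
          using pw[OF s(1), of \<sigma> N] pw1[OF s(1), of \<sigma>] N by (cases N) (auto simp: algebra_simps)
        then show ?thesis using Eeq[OF s(1) sd(1)] unfolding Q_def G_def by (simp add: algebra_simps)
      qed
      moreover have "\<bar>be * s^N * Dl s\<bar> \<le> s^N * (s powr \<sigma> * (\<bar>be\<bar> * L * K * s^2))"
      proof -
        have "\<bar>Dl s\<bar> \<le> L * (K * (s powr \<sigma> * s^2))"
          using Lip[of s] s sd Kb[OF s(1) sd(2)] L by (meson less_imp_le mult_left_mono order_trans)
        then have "\<bar>be\<bar> * s^N * \<bar>Dl s\<bar> \<le> \<bar>be\<bar> * s^N * (L * (K * (s powr \<sigma> * s^2)))"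
          using s by (intro mult_left_mono) auto
        then show ?thesis using s by (simp add: abs_mult algebra_simps)
      qed
      ultimately have "\<bar>s^(N-1) * Q s\<bar> \<le> s^N * (s powr \<sigma> * (e' + \<bar>c0\<bar> * L * K * s^2)) + s^N * (s powr \<sigma> * (\<bar>be\<bar> * L * K * s^2))"
        using Gb[of s] s abs_triangle_ineq4[of "G s" "be * s^N * Dl s"] by simp
      also have "\<dots> = s^(N-1) * (s * s powr \<sigma> * (e' + c3 * s^2))"
        using N unfolding c3_def by (cases N) (auto simp: algebra_simps)
      finally have "s^(N-1) * \<bar>Q s\<bar> \<le> s^(N-1) * (s * s powr \<sigma> * (e' + c3 * s^2))"
        using s by (simp add: abs_mult)
      then have "\<bar>Q s\<bar> \<le> s * s powr \<sigma> * (e' + c3 * s^2)" using s by (simp add: mult_le_cancel_left_pos)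
      also have "\<dots> \<le> x * x powr \<sigma> * (e' + c3 * s^2)"
        using s \<sigma> e' c3 by (intro mult_right_mono mult_mono powr_mono2) auto
      also have "\<dots> \<le> x * x powr \<sigma> * (2 * e')"
      proof -
        have "c3 * s^2 \<le> e'" using rc[of s] s x by auto
        then show ?thesis using x by (intro mult_left_mono) auto
      qed
      finally show ?thesis .
    qed
    define H where "H t = D t - a0 / ((\<sigma> + 2) * (\<sigma> + real N)) * t powr (\<sigma> + 2)" for t
    have "\<bar>H x - H 0\<bar> \<le> x * x powr \<sigma> * (2 * e') * x"
    proof (rule mvt_bound[OF x(1)])
      show "continuous_on {0..x} H" unfolding H_def
        using Dc xd \<sigma>
        by (auto intro!: continuous_intros continuous_on_powr' intro: continuous_on_subset)
      show "(H has_real_derivative Q t) (at t)" if t: "0 < t" "t < x" for t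
      proof -
        have "(H has_real_derivative D1 t - a0 / ((\<sigma> + 2) * (\<sigma> + real N)) * ((\<sigma> + 2) * t powr (\<sigma> + 2 - 1))) (at t)"
          unfolding H_def[abs_def] using Dd[of t] t xd powr_deriv_at[OF t(1), of "\<sigma> + 2"]
          by (intro DERIV_diff DERIV_cmult) auto
        moreover have "a0 / ((\<sigma> + 2) * (\<sigma> + real N)) * ((\<sigma> + 2) * t powr (\<sigma> + 2 - 1))
            = a0 / (\<sigma> + real N) * t powr (\<sigma> + 1)"
        proof -
          have "\<sigma> + 2 \<noteq> 0" using \<sigma> by auto
          moreover have "\<sigma> + 2 - 1 = \<sigma> + 1" by simp
          ultimately show ?thesis using aux_cancel[of "\<sigma> + 2" a0 "\<sigma> + real N" "t powr (\<sigma> + 1)"] by (simp add: add.commute)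
        qed
        ultimately show ?thesis unfolding Q_def by metis
      qed
      show "\<bar>Q t\<bar> \<le> x * x powr \<sigma> * (2 * e')" if "0 < t" "t < x" for t using Qb that by auto
    qed
    moreover have "H 0 = 0" using D0 \<sigma> by (simp add: H_def)
    moreover have "x * x powr \<sigma> * (2 * e') * x = e * x powr (\<sigma> + 2)"
      using pw2[OF x(1), of \<sigma>] by (simp add: e'_def power2_eq_square algebra_simps)
    ultimately show ?thesis unfolding H_def by (metis diff_zero)
  qed
  show ?thesis using main r0 by blast
qed



lemma cont_at0:
  fixes g :: "real \<Rightarrow> real"
  assumes "0 < d" "continuous_on {0..<d} g" "e > 0"
  shows "\<exists>r>0. \<forall>t. 0 \<le> t \<and> t < r \<longrightarrow> \<bar>g t - g 0\<bar> \<le> e"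
proof -
  have "continuous (at 0 within {0..<d}) g"
    using assms by (metis atLeastLessThan_iff continuous_on_eq_continuous_within order_refl)
  then obtain r where r: "r > 0" "\<And>x. x \<in> {0..<d} \<Longrightarrow> dist x 0 < r \<Longrightarrow> dist (g x) (g 0) < e"
    unfolding continuous_within_eps_delta using assms(3) by blast
  have "\<forall>t. 0 \<le> t \<and> t < min r d \<longrightarrow> \<bar>g t - g 0\<bar> \<le> e"
  proof (intro allI impI)
    fix t assume "0 \<le> t \<and> t < min r d"
    then have "dist (g t) (g 0) < e" using r(2)[of t] by (auto simp: dist_real_def)
    then show "\<bar>g t - g 0\<bar> \<le> e" by (simp add: dist_real_def)
  qed
  then show ?thesis using r(1) assms(1) by (intro exI[of _ "min r d"]) auto
qed

lemma compare:
  fixes N :: nat and m \<sigma> p A xm \<delta> :: real and f \<phi> :: "real \<Rightarrow> real"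
  assumes N: "N \<ge> 1" and m: "m > 1" and \<sigma>: "\<sigma> > 0" and A: "A > 0"
    and f_sol: "is_profile N m \<sigma> p 1 A f xm"
    and phi_sol: "is_profile N m \<sigma> p 0 A \<phi> \<delta>"
  shows "\<forall>e>0. \<exists>r>0. \<forall>x. 0 < x \<and> x < r \<longrightarrow>
     \<bar>(f x powr m - \<phi> x powr m) - A powr p / ((\<sigma> + 2) * (\<sigma> + real N)) * x powr (\<sigma> + 2)\<bar> \<le> e * x powr (\<sigma> + 2)"
proof -
  have xm: "xm > 0" and \<delta>: "\<delta> > 0" using f_sol phi_sol by (auto simp: is_profile_def)
  define d0 where "d0 = min xm \<delta>"
  have d0: "0 < d0" "d0 \<le> xm" "d0 \<le> \<delta>" using xm \<delta> by (auto simp: d0_def)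
  obtain F1 U1 U2 where fd: "f 0 = A" "\<forall>x\<in>{0..<d0}. f x > 0" "F1 0 = 0"
    "\<forall>x\<in>{0..<d0}. (f has_real_derivative F1 x) (at x within {0..<d0})"
    "\<forall>x\<in>{0..<d0}. ((\<lambda>x. f x powr m) has_real_derivative U1 x) (at x within {0..<d0})"
    "\<forall>x\<in>{0..<d0}. (U1 has_real_derivative U2 x) (at x within {0..<d0})"
    "continuous_on {0..<d0} U2" "U1 0 = 0"
    "\<forall>x\<in>{0..<d0}. U1 x = m * f x powr (m - 1) * F1 x"
    "\<forall>x. 0 < x \<and> x < d0 \<longrightarrow> U2 x + (real N - 1) / x * U1 x + alpha m \<sigma> p * f x
        + beta m \<sigma> p * x * F1 x - 1 * x powr \<sigma> * f x powr p = 0"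
    by (rule profile_data[OF f_sol d0(1,2) m])
  obtain g1 u1 u2 where pd: "\<phi> 0 = A" "\<forall>x\<in>{0..<d0}. \<phi> x > 0" "g1 0 = 0"
    "\<forall>x\<in>{0..<d0}. (\<phi> has_real_derivative g1 x) (at x within {0..<d0})"
    "\<forall>x\<in>{0..<d0}. ((\<lambda>x. \<phi> x powr m) has_real_derivative u1 x) (at x within {0..<d0})"
    "\<forall>x\<in>{0..<d0}. (u1 has_real_derivative u2 x) (at x within {0..<d0})"
    "continuous_on {0..<d0} u2" "u1 0 = 0"
    "\<forall>x\<in>{0..<d0}. u1 x = m * \<phi> x powr (m - 1) * g1 x"
    "\<forall>x. 0 < x \<and> x < d0 \<longrightarrow> u2 x + (real N - 1) / x * u1 x + alpha m \<sigma> p * \<phi> x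
        + beta m \<sigma> p * x * g1 x - 0 * x powr \<sigma> * \<phi> x powr p = 0"
    by (rule profile_data[OF phi_sol d0(1,3) m])
  define al where "al = alpha m \<sigma> p"
  define be where "be = beta m \<sigma> p"
  define W where "W x = f x powr m" for x
  define w where "w x = \<phi> x powr m" for x
  define D where "D x = W x - w x" for x
  define D1 where "D1 x = U1 x - u1 x" for x
  define Dl where "Dl x = f x - \<phi> x" for x
  define E where "E t = t^(N-1) * D1 t + be * t^N * Dl t" for t
  define fp where "fp t = f t powr p" for t
  define c0 where "c0 = be * real N - al"
  define S where "S = {0..<d0}"
  have fc: "continuous_on S f" using fd(4) unfolding S_def by (intro DERIV_continuous_on) auto
  have pc: "continuous_on S \<phi>" using pd(4) unfolding S_def by (intro DERIV_continuous_on) auto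
  have Wc: "continuous_on S W" using fd(5) unfolding S_def W_def by (intro DERIV_continuous_on) auto
  have wc: "continuous_on S w" using pd(5) unfolding S_def w_def by (intro DERIV_continuous_on) auto
  have U1c: "continuous_on S U1" using fd(6) unfolding S_def by (intro DERIV_continuous_on) auto
  have u1c: "continuous_on S u1" using pd(6) unfolding S_def by (intro DERIV_continuous_on) auto
  have Dc: "continuous_on S D" unfolding D_def using Wc wc by (intro continuous_intros)
  have D0: "D 0 = 0" using fd(1) pd(1) by (simp add: D_def W_def w_def)
  have Dd: "(D has_real_derivative D1 t) (at t)" if "0 < t" "t < d0" for t
  proof -
    have "(W has_real_derivative U1 t) (at t)" using within_to_at[of W "U1 t" t d0] fd(5) that
      unfolding W_def by auto
    moreover have "(w has_real_derivative u1 t) (at t)" using within_to_at[of w "u1 t" t d0] pd(5) that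
      unfolding w_def by auto
    ultimately show ?thesis unfolding D_def[abs_def] D1_def by (intro DERIV_diff)
  qed
  have Ec: "continuous_on S E" unfolding E_def D1_def Dl_def
    using U1c u1c fc pc by (intro continuous_intros)
  have E0: "E 0 = 0" using fd(8) pd(8) N by (simp add: E_def D1_def)
  have Ed: "(E has_real_derivative t^(N-1) * (t powr \<sigma> * fp t + c0 * Dl t)) (at t)"
    if t: "0 < t" "t < d0" for t
  proof -
    have tS: "t \<in> S" using t by (simp add: S_def)
    have dU: "(U1 has_real_derivative U2 t) (at t)" using within_to_at[of U1 "U2 t" t d0] fd(6) t by auto
    have du: "(u1 has_real_derivative u2 t) (at t)" using within_to_at[of u1 "u2 t" t d0] pd(6) t by auto
    have dF: "(f has_real_derivative F1 t) (at t)" using within_to_at[of f "F1 t" t d0] fd(4) t by auto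
    have dg: "(\<phi> has_real_derivative g1 t) (at t)" using within_to_at[of \<phi> "g1 t" t d0] pd(4) t by auto
    have "(E has_real_derivative real (N-1) * t^(N-1-1) * D1 t + t^(N-1) * (U2 t - u2 t)
            + be * (real N * t^(N-1) * Dl t + t^N * (F1 t - g1 t))) (at t)"
      unfolding E_def[abs_def] D1_def Dl_def
      by (rule derivative_eq_intros dU du dF dg refl | simp)+ (simp add: algebra_simps)
    moreover have "real (N-1) * t^(N-1-1) * D1 t + t^(N-1) * (U2 t - u2 t)
            + be * (real N * t^(N-1) * Dl t + t^N * (F1 t - g1 t)) = t^(N-1) * (t powr \<sigma> * fp t + c0 * Dl t)"
    proof -
      define q where "q = (real N - 1) / t"
      have E1: "real (N-1) * t^(N-1-1) = t^(N-1) * q"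
      proof (cases "N = 1")
        case True then show ?thesis by (simp add: q_def)
      next
        case False
        then obtain M where M: "N = Suc (Suc M)" using N by (cases N; cases "N - 1") auto
        then show ?thesis using t by (simp add: field_simps q_def)
      qed
      have tN: "t^N = t^(N-1) * t" using N by (cases N) auto
      have o1: "U2 t = - (q * U1 t) - al * f t - be * t * F1 t + t powr \<sigma> * fp t"
        using fd(10) t unfolding al_def be_def fp_def q_def by auto
      have o2: "u2 t = - (q * u1 t) - al * \<phi> t - be * t * g1 t"
        using pd(10) t unfolding al_def be_def q_def by auto
      show ?thesis unfolding E1 tN o1 o2 D1_def Dl_def c0_def by (simp add: algebra_simps)
    qed
    ultimately show ?thesis by simp
  qed
  have Eeq: "E t = t^(N-1) * D1 t + be * t^N * Dl t" for t by (simp add: E_def)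
  define a where "a = A powr m / 2"
  have a: "a > 0" using A by (simp add: a_def)
  have W0: "W 0 = A powr m" "w 0 = A powr m" using fd(1) pd(1) by (auto simp: W_def w_def)
  obtain rW where rW: "rW > 0" "\<And>t. 0 \<le> t \<Longrightarrow> t < rW \<Longrightarrow> \<bar>W t - W 0\<bar> \<le> a / 2"
    using cont_at0[OF d0(1) Wc[unfolded S_def], of "a/2"] a by auto
  obtain rw where rw: "rw > 0" "\<And>t. 0 \<le> t \<Longrightarrow> t < rw \<Longrightarrow> \<bar>w t - w 0\<bar> \<le> a / 2"
    using cont_at0[OF d0(1) wc[unfolded S_def], of "a/2"] a by auto
  define L where "L = 1/m * a powr (1/m - 1)"
  have L: "L \<ge> 0" using m by (simp add: L_def)
  have Lip: "\<bar>Dl t\<bar> \<le> L * \<bar>D t\<bar>" if t: "0 \<le> t" "t < min d0 (min rW rw)" for t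
  proof -
    have tS: "t \<in> S" using t by (simp add: S_def)
    have Ap: "A powr m > 0" using A by simp
    have "\<bar>W t - W 0\<bar> \<le> a / 2" using rW(2)[of t] t by auto
    then have "W t \<ge> W 0 - a / 2" using abs_ge_minus_self[of "W t - W 0"] by linarith
    then have Wa: "a \<le> W t" using W0 a a_def by linarith
    have "\<bar>w t - w 0\<bar> \<le> a / 2" using rw(2)[of t] t by auto
    then have "w t \<ge> w 0 - a / 2" using abs_ge_minus_self[of "w t - w 0"] by linarith
    then have wa: "a \<le> w t" using W0 a a_def by linarith
    have "f t > 0" using fd(2) tS unfolding S_def by blast
    then have "f t = W t powr (1/m)" using m unfolding W_def by (simp add: powr_powr)
    moreover have "\<phi> t > 0" using pd(2) tS unfolding S_def by blast
    then have "\<phi> t = w t powr (1/m)" using m unfolding w_def by (simp add: powr_powr)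
    ultimately show ?thesis unfolding Dl_def D_def L_def
      using powr_lip[OF a Wa wa, of "1/m"] m by simp
  qed
  have fpc0: "continuous_on S fp"
  proof -
    have "\<And>x. x \<in> S \<Longrightarrow> f x \<noteq> 0" using fd(2) unfolding S_def by force
    then show ?thesis unfolding fp_def using fc by (auto intro!: continuous_intros)
  qed
  obtain r1 where r1: "r1 > 0" "\<And>t. 0 \<le> t \<Longrightarrow> t < r1 \<Longrightarrow> \<bar>fp t - fp 0\<bar> \<le> 1"
    using cont_at0[OF d0(1) fpc0[unfolded S_def], of 1] by auto
  define P0 where "P0 = \<bar>fp 0\<bar> + 1"
  have fp0: "fp 0 = A powr p" using fd(1) by (simp add: fp_def)
  define d where "d = min d0 (min (min rW rw) r1)"
  have d: "0 < d" "d \<le> d0" using d0 rW rw r1 by (auto simp: d_def)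
  have subS: "{0..<d} \<subseteq> S" using d by (auto simp: S_def)
  have fpb: "\<bar>fp t\<bar> \<le> P0" if "0 \<le> t" "t < d" for t
    using r1(2)[of t] that unfolding P0_def d_def by auto
  have fpc: "\<exists>r>0. \<forall>t. 0 < t \<and> t < r \<longrightarrow> \<bar>fp t - A powr p\<bar> \<le> e" if ee: "e > 0" for e
  proof -
    obtain r where "r > 0" "\<And>t. 0 \<le> t \<Longrightarrow> t < r \<Longrightarrow> \<bar>fp t - fp 0\<bar> \<le> e"
      using cont_at0[OF d0(1) fpc0[unfolded S_def] ee] by auto
    then show ?thesis unfolding fp0 by (intro exI[of _ r]) auto
  qed
  show ?thesis
  proof (intro allI impI)
    fix e :: real assume e: "e > 0"
    have h1: "continuous_on {0..<d} D" using Dc subS continuous_on_subset by blast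
    have h3: "\<And>t. 0 < t \<Longrightarrow> t < d \<Longrightarrow> (D has_real_derivative D1 t) (at t)" using Dd d by auto
    have h4: "continuous_on {0..<d} E" using Ec subS continuous_on_subset by blast
    have h6: "\<And>t. 0 < t \<Longrightarrow> t < d \<Longrightarrow> (E has_real_derivative t^(N-1) * (t powr \<sigma> * fp t + c0 * Dl t)) (at t)"
      using Ed d by auto
    have h7: "\<And>t. 0 < t \<Longrightarrow> t < d \<Longrightarrow> E t = t^(N-1) * D1 t + be * t^N * Dl t" by (rule Eeq)
    have h8: "\<And>t. 0 \<le> t \<Longrightarrow> t < d \<Longrightarrow> \<bar>Dl t\<bar> \<le> L * \<bar>D t\<bar>" using Lip by (auto simp: d_def)
    have h10: "\<And>t. 0 \<le> t \<Longrightarrow> t < d \<Longrightarrow> \<bar>fp t\<bar> \<le> P0" using fpb by auto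
    have h11: "\<And>e. e > 0 \<Longrightarrow> \<exists>r>0. \<forall>t. 0 < t \<and> t < r \<longrightarrow> \<bar>fp t - A powr p\<bar> \<le> e" using fpc by auto
    have "\<exists>r>0. \<forall>x. 0 < x \<and> x < r \<longrightarrow>
           \<bar>D x - A powr p / ((\<sigma> + 2) * (\<sigma> + real N)) * x powr (\<sigma> + 2)\<bar> \<le> e * x powr (\<sigma> + 2)"
      by (rule core2[OF d(1) N \<sigma> h1 D0 h3 h4 E0 h6 h7 h8 L h10 h11 e])
    then show "\<exists>r>0. \<forall>x. 0 < x \<and> x < r \<longrightarrow>
     \<bar>(f x powr m - \<phi> x powr m) - A powr p / ((\<sigma> + 2) * (\<sigma> + real N)) * x powr (\<sigma> + 2)\<bar> \<le> e * x powr (\<sigma> + 2)"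
      by (simp add: D_def W_def w_def)
  qed
qed



lemma final_o:
  fixes g w :: "real \<Rightarrow> real" and B :: "nat \<Rightarrow> real"
  assumes cmp: "\<forall>e>0. \<exists>r>0. \<forall>x. 0 < x \<and> x < r \<longrightarrow>
       \<bar>(g x - w x) - c * x powr (\<sigma> + 2)\<bar> \<le> e * x powr (\<sigma> + 2)"
    and tay: "\<exists>C r. 0 < r \<and> (\<forall>x. 0 < x \<and> x < r \<longrightarrow> \<bar>w x - (\<Sum>j\<le>K. B j * x ^ j)\<bar> \<le> C * x ^ Suc K)"
    and K: "real (Suc K) > \<sigma> + 2"
  shows "(\<lambda>x. g x - (\<Sum>j\<le>K. B j * x ^ j) - c * x powr (\<sigma> + 2)) \<in> o[at_right 0](\<lambda>x. x powr (\<sigma> + 2))"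
proof (rule landau_o.smallI)
  fix c' :: real assume c': "c' > 0"
  obtain C r2 where r2: "0 < r2" "\<And>x. 0 < x \<Longrightarrow> x < r2 \<Longrightarrow> \<bar>w x - (\<Sum>j\<le>K. B j * x ^ j)\<bar> \<le> C * x ^ Suc K"
    using tay by blast
  obtain r1 where r1: "0 < r1" "\<And>x. 0 < x \<Longrightarrow> x < r1 \<Longrightarrow>
       \<bar>(g x - w x) - c * x powr (\<sigma> + 2)\<bar> \<le> c'/2 * x powr (\<sigma> + 2)"
    using cmp c' by (meson half_gt_zero)
  define \<gamma> where "\<gamma> = real (Suc K) - (\<sigma> + 2)"
  have \<gamma>: "\<gamma> > 0" using K by (simp add: \<gamma>_def)
  define y where "y = c' / (2 * (\<bar>C\<bar> + 1))"
  have y: "y > 0" using c' by (simp add: y_def)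
  define r3 where "r3 = y powr (1 / \<gamma>)"
  have r3: "r3 > 0" using y by (simp add: r3_def)
  define r where "r = min r1 (min r2 r3)"
  have r: "r > 0" using r1 r2 r3 by (simp add: r_def)
  have "\<forall>x>0. x < r \<longrightarrow> norm (g x - (\<Sum>j\<le>K. B j * x ^ j) - c * x powr (\<sigma> + 2)) \<le> c' * norm (x powr (\<sigma> + 2))"
  proof (intro allI impI)
    fix x :: real assume x: "x > 0" "x < r"
    then have xr: "x < r1" "x < r2" "x < r3" by (auto simp: r_def)
    have "x powr \<gamma> < r3 powr \<gamma>" using x xr \<gamma> by (intro powr_less_mono2) auto
    also have "r3 powr \<gamma> = y" using y \<gamma> by (simp add: r3_def powr_powr)
    finally have xg: "x powr \<gamma> < y" .
    have "x ^ Suc K = x powr (real (Suc K))" by (metis powr_realpow x(1))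
    also have "\<dots> = x powr (\<sigma> + 2) * x powr \<gamma>" unfolding \<gamma>_def by (simp add: powr_add[symmetric])
    finally have xK: "x ^ Suc K = x powr (\<sigma> + 2) * x powr \<gamma>" .
    have "C * x ^ Suc K \<le> (\<bar>C\<bar> + 1) * (x powr (\<sigma> + 2) * x powr \<gamma>)"
      unfolding xK by (intro mult_right_mono) auto
    also have "\<dots> \<le> (\<bar>C\<bar> + 1) * (x powr (\<sigma> + 2) * y)"
      using xg x by (intro mult_left_mono) auto
    also have "\<dots> = c'/2 * x powr (\<sigma> + 2)" unfolding y_def by (simp add: field_simps)
    finally have T: "\<bar>w x - (\<Sum>j\<le>K. B j * x ^ j)\<bar> \<le> c'/2 * x powr (\<sigma> + 2)" using r2(2)[OF x(1) xr(2)] by linarith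
    have "g x - (\<Sum>j\<le>K. B j * x ^ j) - c * x powr (\<sigma> + 2) =
          ((g x - w x) - c * x powr (\<sigma> + 2)) + (w x - (\<Sum>j\<le>K. B j * x ^ j))" by simp
    then have "\<bar>g x - (\<Sum>j\<le>K. B j * x ^ j) - c * x powr (\<sigma> + 2)\<bar> \<le> c'/2 * x powr (\<sigma> + 2) + c'/2 * x powr (\<sigma> + 2)"
      using r1(2)[OF x(1) xr(1)] T abs_triangle_ineq[of "(g x - w x) - c * x powr (\<sigma> + 2)" "w x - (\<Sum>j\<le>K. B j * x ^ j)"]
      by linarith
    then show "norm (g x - (\<Sum>j\<le>K. B j * x ^ j) - c * x powr (\<sigma> + 2)) \<le> c' * norm (x powr (\<sigma> + 2))"
      using x by simp
  qed
  then show "\<forall>\<^sub>F x in at_right 0. norm (g x - (\<Sum>j\<le>K. B j * x ^ j) - c * x powr (\<sigma> + 2)) \<le> c' * norm (x powr (\<sigma> + 2))"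
    unfolding eventually_at_right_field using r by (intro exI[of _ r]) auto
qed

theorem lemma4p2:
  fixes N :: nat and m \<sigma> p A xm \<delta> :: real and f \<phi> :: "real \<Rightarrow> real"
  assumes "N \<ge> 1" and "m > 1" and "\<sigma> > 0" and "p > m" and "A > 0"
    and f_sol: "is_profile N m \<sigma> p 1 A f xm"
    and phi_sol: "is_profile N m \<sigma> p 0 A \<phi> \<delta>"
  defines "k0 \<equiv> nat (\<lceil>\<sigma>\<rceil> - 1)"
    and "B \<equiv> taylor_coeff0 (\<lambda>\<xi>. \<phi> \<xi> powr m)"
  shows "(\<sigma> \<notin> \<nat> \<longrightarrow>
           (\<lambda>\<xi>. f \<xi> powr m - (\<Sum>j\<le>k0 + 2. B j * \<xi> ^ j)
                 - A powr p / ((\<sigma> + 2) * (\<sigma> + real N)) * \<xi> powr (\<sigma> + 2))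
           \<in> o[at_right 0](\<lambda>\<xi>. \<xi> powr (\<sigma> + 2)))
       \<and> (\<sigma> \<in> \<nat> \<longrightarrow>
           (\<lambda>\<xi>. f \<xi> powr m - (\<Sum>j\<le>k0 + 3. B j * \<xi> ^ j)
                 - A powr p / ((\<sigma> + 2) * (\<sigma> + real N)) * \<xi> powr (\<sigma> + 2))
           \<in> o[at_right 0](\<lambda>\<xi>. \<xi> powr (\<sigma> + 2)))"
proof -
  define w where "w = (\<lambda>\<xi>. \<phi> \<xi> powr m)"
  have \<delta>: "\<delta> > 0" using phi_sol by (simp add: is_profile_def)
  have cmp: "\<forall>e>0. \<exists>r>0. \<forall>x. 0 < x \<and> x < r \<longrightarrow>
     \<bar>(f x powr m - w x) - A powr p / ((\<sigma> + 2) * (\<sigma> + real N)) * x powr (\<sigma> + 2)\<bar> \<le> e * x powr (\<sigma> + 2)"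
    using compare[OF assms(1,2,3,5) f_sol phi_sol] by (simp add: w_def)
  have Bj: "B j = (Dop ^^ j) w 0 / fact j" for j
    unfolding B_def taylor_coeff0_def Dj_eq w_def ..
  have tay: "\<exists>C r. 0 < r \<and> (\<forall>x. 0 < x \<and> x < r \<longrightarrow> \<bar>w x - (\<Sum>j\<le>K. B j * x ^ j)\<bar> \<le> C * x ^ Suc K)" for K
    using taylor_bound[OF \<delta> profile_smooth[OF assms(1,2) phi_sol, of "Suc K"]]
    unfolding Bj w_def by simp
  have ceil: "real_of_int \<lceil>\<sigma>\<rceil> \<ge> \<sigma>" by simp
  have "0 < \<lceil>\<sigma>\<rceil>" using assms(3) by simp
  then have c1: "\<lceil>\<sigma>\<rceil> \<ge> 1" by simp
  then have k0: "real k0 = real_of_int \<lceil>\<sigma>\<rceil> - 1" unfolding k0_def by simp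
  have part1: "real (Suc (k0 + 2)) > \<sigma> + 2" if "\<sigma> \<notin> \<nat>"
  proof -
    have ne: "real_of_int \<lceil>\<sigma>\<rceil> \<noteq> \<sigma>"
    proof
      assume h: "real_of_int \<lceil>\<sigma>\<rceil> = \<sigma>"
      have "\<lceil>\<sigma>\<rceil> \<ge> 0" using c1 by simp
      then have e1: "real (nat \<lceil>\<sigma>\<rceil>) = real_of_int \<lceil>\<sigma>\<rceil>" by simp
      then have "\<sigma> = real (nat \<lceil>\<sigma>\<rceil>)" using h by linarith
      then have "\<sigma> \<in> \<nat>" by (metis of_nat_in_Nats)
      then show False using that by simp
    qed
    have "real_of_int \<lceil>\<sigma>\<rceil> > \<sigma>" by (rule order_le_neq_trans[OF ceil ne[symmetric]])
    then show ?thesis using k0 by simp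
  qed
  have "real (Suc (k0 + 3)) = real k0 + 4" by simp
  then have part2: "real (Suc (k0 + 3)) > \<sigma> + 2" using k0 ceil by linarith
  show ?thesis
  proof (intro conjI impI)
    assume "\<sigma> \<notin> \<nat>"
    show "(\<lambda>\<xi>. f \<xi> powr m - (\<Sum>j\<le>k0 + 2. B j * \<xi> ^ j)
                 - A powr p / ((\<sigma> + 2) * (\<sigma> + real N)) * \<xi> powr (\<sigma> + 2))
           \<in> o[at_right 0](\<lambda>\<xi>. \<xi> powr (\<sigma> + 2))"
      by (rule final_o[OF cmp tay part1[OF \<open>\<sigma> \<notin> \<nat>\<close>]])
  next
    show "(\<lambda>\<xi>. f \<xi> powr m - (\<Sum>j\<le>k0 + 3. B j * \<xi> ^ j)
                 - A powr p / ((\<sigma> + 2) * (\<sigma> + real N)) * \<xi> powr (\<sigma> + 2))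
           \<in> o[at_right 0](\<lambda>\<xi>. \<xi> powr (\<sigma> + 2))"
      by (rule final_o[OF cmp tay part2])
  qed
qed


end
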